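(* Assume $J$ with domain $\mathcal F(\Gamma)$ is not essentially selfadjoint in $\ell^2(\Gamma)$. Fix a vertex $x_0$ with $\ell(x_0)=0$ and a nonreal $z\in\mathbb C$. Let $u:\Gamma\to\mathbb C$ satisfy $u\neq0$, $u(x_0)=0$ and $(Ju)(x)=zu(x)$ for all $x\neq x_0$. Then $u\in\ell^2(\Gamma)$.
   Context: Let $\Gamma$ be an infinite connected tree whose vertices are arranged in levels $\ell(x)\in\{0,1,2,\dots\}$: every vertex $x$ is adjacent to exactly one vertex $x'$ with $\ell(x')=\ell(x)+1$; for $\ell(x)\ge 1$ the set $N_x=\{y:\ y'=x\}$ of neighbours of $x$ on level $\ell(x)-1$ is finite and nonempty; $N_x=\emptyset$ if $\ell(x)=0$; there are no other edges. Fix $\lambda_x>0$, $\beta_x\in\mathbb R$. The Jacobi matrix $J$ acts on functions $v:\Gamma\to\mathbb C$ by $(Jv)(x)=\lambda_x v(x')+\beta_x v(x)+\sum_{y\in N_x}\lambda_y v(y)$. $\mathcal F(\Gamma)$ denotes the finitely supported functions; $J$ with domain $\mathcal F(\Gamma)$ is symmetric in $\ell^2(\Gamma)$. *)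

theory Defs
  imports "HOL-Analysis.Analysis"
begin

text \<open>The tree: vertices are the elements of the type 'a; lev is the level function,
  par x is the unique neighbour x' of x on the next level. Edges are exactly x -- par x.\<close>

definition children :: "('a \<Rightarrow> 'a) \<Rightarrow> 'a \<Rightarrow> 'a set" where
  "children par x = {y. par y = x}"

definition level_tree :: "('a \<Rightarrow> nat) \<Rightarrow> ('a \<Rightarrow> 'a) \<Rightarrow> bool" where
  "level_tree lev par \<longleftrightarrow>
     infinite (UNIV :: 'a set) \<and>
     (\<forall>x. lev (par x) = Suc (lev x)) \<and>
     (\<forall>x. lev x \<ge> 1 \<longrightarrow> finite (children par x) \<and> children par x \<noteq> {}) \<and>
     (\<forall>x. lev x = 0 \<longrightarrow> children par x = {}) \<and>
     (\<forall>x y. \<exists>n m. (par ^^ n) x = (par ^^ m) y)"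

definition jacobi :: "('a \<Rightarrow> 'a) \<Rightarrow> ('a \<Rightarrow> real) \<Rightarrow> ('a \<Rightarrow> real) \<Rightarrow> ('a \<Rightarrow> complex) \<Rightarrow> 'a \<Rightarrow> complex" where
  "jacobi par lam bet v x =
     complex_of_real (lam x) * v (par x) + complex_of_real (bet x) * v x
     + (\<Sum>y\<in>children par x. complex_of_real (lam y) * v y)"

definition fin_supp :: "('a \<Rightarrow> complex) set" where
  "fin_supp = {v. finite {x. v x \<noteq> 0}}"

definition l2 :: "('a \<Rightarrow> complex) set" where
  "l2 = {v. (\<lambda>x. (cmod (v x))\<^sup>2) summable_on UNIV}"

definition l2_inner :: "('a \<Rightarrow> complex) \<Rightarrow> ('a \<Rightarrow> complex) \<Rightarrow> complex" where
  "l2_inner v w = infsum (\<lambda>x. v x * cnj (w x)) UNIV"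

definition l2_norm :: "('a \<Rightarrow> complex) \<Rightarrow> real" where
  "l2_norm v = sqrt (infsum (\<lambda>x. (cmod (v x))\<^sup>2) UNIV)"

text \<open>Operators in l^2 are represented by their graphs (sets of pairs (v, Tv)).\<close>

definition adjoint_graph :: "(('a \<Rightarrow> complex) \<times> ('a \<Rightarrow> complex)) set \<Rightarrow> (('a \<Rightarrow> complex) \<times> ('a \<Rightarrow> complex)) set" where
  "adjoint_graph G = {(w, g). w \<in> l2 \<and> g \<in> l2 \<and> (\<forall>(v, h)\<in>G. l2_inner h w = l2_inner v g)}"

definition closure_graph :: "(('a \<Rightarrow> complex) \<times> ('a \<Rightarrow> complex)) set \<Rightarrow> (('a \<Rightarrow> complex) \<times> ('a \<Rightarrow> complex)) set" where
  "closure_graph G = {(w, g). w \<in> l2 \<and> g \<in> l2 \<and>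
     (\<exists>s :: nat \<Rightarrow> ('a \<Rightarrow> complex) \<times> ('a \<Rightarrow> complex). (\<forall>n. s n \<in> G) \<and>
        (\<lambda>n. l2_norm (\<lambda>x. fst (s n) x - w x)) \<longlonglongrightarrow> 0 \<and>
        (\<lambda>n. l2_norm (\<lambda>x. snd (s n) x - g x)) \<longlonglongrightarrow> 0)}"

definition selfadjoint_graph :: "(('a \<Rightarrow> complex) \<times> ('a \<Rightarrow> complex)) set \<Rightarrow> bool" where
  "selfadjoint_graph G \<longleftrightarrow> G = adjoint_graph G"

definition essentially_selfadjoint :: "(('a \<Rightarrow> complex) \<times> ('a \<Rightarrow> complex)) set \<Rightarrow> bool" where
  "essentially_selfadjoint G \<longleftrightarrow> selfadjoint_graph (closure_graph G)"

definition jacobi_graph :: "('a \<Rightarrow> 'a) \<Rightarrow> ('a \<Rightarrow> real) \<Rightarrow> ('a \<Rightarrow> real) \<Rightarrow> (('a \<Rightarrow> complex) \<times> ('a \<Rightarrow> complex)) set" where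
  "jacobi_graph par lam bet = {(v, jacobi par lam bet v) | v. v \<in> fin_supp}"

end

theory Submission
  imports Defs
begin


abbreviation N2 :: "('a \<Rightarrow> complex) \<Rightarrow> real" where
  "N2 f \<equiv> infsum (\<lambda>x. (cmod (f x))\<^sup>2) UNIV"

lemma l2_norm_sq: "(l2_norm f)\<^sup>2 = N2 f"
  unfolding l2_norm_def by (simp add: infsum_nonneg)

lemma l2_norm_nonneg: "l2_norm f \<ge> 0"
  unfolding l2_norm_def by (simp add: infsum_nonneg)

lemma l2_sumF: "f \<in> l2 \<Longrightarrow> finite F \<Longrightarrow> (\<Sum>x\<in>F. (cmod (f x))\<^sup>2) \<le> N2 f"
  unfolding l2_def by (intro finite_sum_le_infsum) auto

lemma l2_L2F: "f \<in> l2 \<Longrightarrow> finite F \<Longrightarrow> L2_set (\<lambda>x. cmod (f x)) F \<le> l2_norm f"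
  unfolding L2_set_def l2_norm_def by (simp add: l2_sumF)

lemma l2_bound:
  assumes "\<And>F. finite F \<Longrightarrow> L2_set (\<lambda>x. cmod (f x)) F \<le> B"
  shows "f \<in> l2 \<and> l2_norm f \<le> B"
proof -
  have B0: "B \<ge> 0" using assms[of "{}"] by simp
  have S: "\<And>F. finite F \<Longrightarrow> (\<Sum>x\<in>F. (cmod (f x))\<^sup>2) \<le> B\<^sup>2"
  proof -
    fix F :: "'a set" assume "finite F"
    from assms[OF this] have "sqrt (\<Sum>x\<in>F. (cmod (f x))\<^sup>2) \<le> B" unfolding L2_set_def .
    then show "(\<Sum>x\<in>F. (cmod (f x))\<^sup>2) \<le> B\<^sup>2"
      using B0 by (simp add: real_sqrt_le_iff sqrt_le_D)
  qed
  have sm: "(\<lambda>x. (cmod (f x))\<^sup>2) summable_on UNIV"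
    by (rule nonneg_bdd_above_summable_on) (auto intro!: bdd_aboveI[where M="B\<^sup>2"] S)
  have "N2 f \<le> B\<^sup>2" by (rule infsum_le_finite_sums[OF sm]) (use S in auto)
  then have "l2_norm f \<le> B" unfolding l2_norm_def using B0 by (simp add: real_sqrt_le_iff real_le_lsqrt)
  then show ?thesis using sm unfolding l2_def by auto
qed

lemma l2_pt: "f \<in> l2 \<Longrightarrow> cmod (f x) \<le> l2_norm f"
  using l2_L2F[of f "{x}"] by (simp add: L2_set_def)

lemma l2_add:
  assumes "f \<in> l2" "g \<in> l2"
  shows "(\<lambda>x. f x + g x) \<in> l2 \<and> l2_norm (\<lambda>x. f x + g x) \<le> l2_norm f + l2_norm g"
proof (rule l2_bound)
  fix F :: "'a set" assume F: "finite F"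
  have "L2_set (\<lambda>x. cmod (f x + g x)) F \<le> L2_set (\<lambda>x. cmod (f x) + cmod (g x)) F"
    by (rule L2_set_mono) (auto intro: norm_triangle_ineq)
  also have "\<dots> \<le> L2_set (\<lambda>x. cmod (f x)) F + L2_set (\<lambda>x. cmod (g x)) F"
    by (rule L2_set_triangle_ineq)
  also have "\<dots> \<le> l2_norm f + l2_norm g" using l2_L2F[OF assms(1) F] l2_L2F[OF assms(2) F] by simp
  finally show "L2_set (\<lambda>x. cmod (f x + g x)) F \<le> l2_norm f + l2_norm g" .
qed

lemma l2_scale:
  assumes "f \<in> l2"
  shows "(\<lambda>x. c * f x) \<in> l2 \<and> l2_norm (\<lambda>x. c * f x) = cmod c * l2_norm f"
proof -
  have "N2 (\<lambda>x. c * f x) = (cmod c)\<^sup>2 * N2 f"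
    using infsum_cmult_right[of "(cmod c)\<^sup>2" "\<lambda>x. (cmod (f x))\<^sup>2" UNIV] assms
    by (simp add: l2_def norm_mult power_mult_distrib)
  moreover have "(\<lambda>x. (cmod (c * f x))\<^sup>2) summable_on UNIV"
    using summable_on_cmult_right[of "\<lambda>x. (cmod (f x))\<^sup>2" UNIV "(cmod c)\<^sup>2"] assms
    by (simp add: l2_def norm_mult power_mult_distrib)
  ultimately show ?thesis unfolding l2_def l2_norm_def
    by (simp add: real_sqrt_mult)
qed


lemma l2_diff:
  assumes "f \<in> l2" "g \<in> l2"
  shows "(\<lambda>x. f x - g x) \<in> l2"
  using l2_add[OF assms(1) l2_scale[OF assms(2), of "-1", THEN conjunct1]] by simp

lemma l2_norm_diff_le:
  assumes "f \<in> l2" "g \<in> l2"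
  shows "l2_norm (\<lambda>x. f x - g x) \<le> l2_norm f + l2_norm g"
  using l2_add[OF assms(1) l2_scale[OF assms(2), of "-1", THEN conjunct1]] l2_scale[OF assms(2), of "-1"] by simp

lemma l2_norm_tri:
  assumes "f \<in> l2" "g \<in> l2" "h \<in> l2"
  shows "l2_norm (\<lambda>x. f x - h x) \<le> l2_norm (\<lambda>x. f x - g x) + l2_norm (\<lambda>x. g x - h x)"
  using l2_add[OF l2_diff[OF assms(1,2)] l2_diff[OF assms(2,3)]] by simp

lemma l2_norm_commute: "l2_norm (\<lambda>x. f x - g x) = l2_norm (\<lambda>x. g x - f x)"
  unfolding l2_norm_def by (simp add: norm_minus_commute)

lemma fin_infsum:
  assumes "finite S" "\<And>x. x \<notin> S \<Longrightarrow> \<phi> x = 0"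
  shows "\<phi> summable_on UNIV \<and> infsum \<phi> UNIV = sum \<phi> S"
proof -
  have "\<phi> summable_on S" using assms(1) by simp
  then have a: "\<phi> summable_on UNIV" using summable_on_cong_neutral[of UNIV S \<phi> \<phi>] assms(2) by auto
  have "infsum \<phi> UNIV = infsum \<phi> S" using infsum_cong_neutral[of UNIV S \<phi> \<phi>] assms(2) by auto
  then show ?thesis using a assms(1) by simp
qed

lemma fin_l2:
  assumes "finite S" "\<And>x. x \<notin> S \<Longrightarrow> f x = 0"
  shows "f \<in> l2"
  using fin_infsum[of S "\<lambda>x. (cmod (f x))\<^sup>2"] assms unfolding l2_def by auto

lemma fin_supp_l2: "f \<in> fin_supp \<Longrightarrow> f \<in> l2"
  unfolding fin_supp_def by (rule fin_l2[of "{x. f x \<noteq> 0}"]) auto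

lemma l2_CS:
  assumes "a \<in> l2" "b \<in> l2"
  shows "(\<lambda>x. a x * cnj (b x)) summable_on UNIV \<and> cmod (l2_inner a b) \<le> l2_norm a * l2_norm b"
proof -
  have F: "(\<Sum>x\<in>F. cmod (a x * cnj (b x))) \<le> l2_norm a * l2_norm b" if "finite F" for F
  proof -
    have "(\<Sum>x\<in>F. cmod (a x * cnj (b x))) = (\<Sum>x\<in>F. \<bar>cmod (a x)\<bar> * \<bar>cmod (b x)\<bar>)"
      by (simp add: norm_mult)
    also have "\<dots> \<le> L2_set (\<lambda>x. cmod (a x)) F * L2_set (\<lambda>x. cmod (b x)) F"
      by (rule L2_set_mult_ineq)
    also have "\<dots> \<le> l2_norm a * l2_norm b"
      using l2_L2F[OF assms(1) that] l2_L2F[OF assms(2) that]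
      by (intro mult_mono) (auto simp: l2_norm_nonneg)
    finally show ?thesis .
  qed
  have abs: "(\<lambda>x. cmod (a x * cnj (b x))) summable_on UNIV"
  proof (rule nonneg_bdd_above_summable_on)
    show "bdd_above (sum (\<lambda>x. cmod (a x * cnj (b x))) ` {F. F \<subseteq> UNIV \<and> finite F})"
      unfolding bdd_above_def using F by blast
  qed simp
  have sm: "(\<lambda>x. a x * cnj (b x)) summable_on UNIV"
    by (rule abs_summable_summable[OF abs])
  have "cmod (l2_inner a b) \<le> infsum (\<lambda>x. cmod (a x * cnj (b x))) UNIV"
    unfolding l2_inner_def by (rule norm_infsum_bound[OF abs])
  also have "\<dots> \<le> l2_norm a * l2_norm b"
    by (rule infsum_le_finite_sums[OF abs], rule F)
  finally show ?thesis using sm by simp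
qed

lemma l2_inner_diff_left:
  assumes "a \<in> l2" "b \<in> l2" "c \<in> l2"
  shows "l2_inner (\<lambda>x. a x - b x) c = l2_inner a c - l2_inner b c"
proof -
  have s1: "(\<lambda>x. a x * cnj (c x)) summable_on UNIV" using l2_CS[OF assms(1,3)] by simp
  have s2: "(\<lambda>x. - (b x * cnj (c x))) summable_on UNIV" using l2_CS[OF assms(2,3)] by (simp add: summable_on_uminus)
  have "l2_inner (\<lambda>x. a x - b x) c = infsum (\<lambda>x. a x * cnj (c x) + - (b x * cnj (c x))) UNIV"
    unfolding l2_inner_def by (simp add: left_diff_distrib)
  also have "\<dots> = l2_inner a c + infsum (\<lambda>x. - (b x * cnj (c x))) UNIV"
    unfolding l2_inner_def by (rule infsum_add[OF s1 s2])
  also have "\<dots> = l2_inner a c - l2_inner b c"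
    unfolding l2_inner_def by (simp add: infsum_uminus)
  finally show ?thesis .
qed

lemma l2_inner_diff_right:
  assumes "a \<in> l2" "b \<in> l2" "c \<in> l2"
  shows "l2_inner c (\<lambda>x. a x - b x) = l2_inner c a - l2_inner c b"
proof -
  have s1: "(\<lambda>x. c x * cnj (a x)) summable_on UNIV" using l2_CS[OF assms(3,1)] by simp
  have s2: "(\<lambda>x. - (c x * cnj (b x))) summable_on UNIV" using l2_CS[OF assms(3,2)] by (simp add: summable_on_uminus)
  have "l2_inner c (\<lambda>x. a x - b x) = infsum (\<lambda>x. c x * cnj (a x) + - (c x * cnj (b x))) UNIV"
    unfolding l2_inner_def by (simp add: right_diff_distrib)
  also have "\<dots> = l2_inner c a + infsum (\<lambda>x. - (c x * cnj (b x))) UNIV"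
    unfolding l2_inner_def by (rule infsum_add[OF s1 s2])
  also have "\<dots> = l2_inner c a - l2_inner c b"
    unfolding l2_inner_def by (simp add: infsum_uminus)
  finally show ?thesis .
qed

lemma l2_complete:
  assumes f: "\<And>n. f n \<in> l2"
    and C: "\<And>e. e > 0 \<Longrightarrow> \<exists>N. \<forall>m\<ge>N. \<forall>n\<ge>N. l2_norm (\<lambda>x. f m x - f n x) < e"
  shows "\<exists>g\<in>l2. (\<lambda>n. l2_norm (\<lambda>x. f n x - g x)) \<longlonglongrightarrow> 0"
proof -
  have cp: "Cauchy (\<lambda>n. f n x)" for x
  proof (rule CauchyI)
    fix e :: real assume "e > 0"
    then obtain N where N: "\<forall>m\<ge>N. \<forall>n\<ge>N. l2_norm (\<lambda>x. f m x - f n x) < e" using C by blast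
    show "\<exists>M. \<forall>m\<ge>M. \<forall>n\<ge>M. norm (f m x - f n x) < e"
    proof (intro exI[of _ N] allI impI)
      fix m n assume "m \<ge> N" "n \<ge> N"
      have "cmod (f m x - f n x) \<le> l2_norm (\<lambda>x. f m x - f n x)"
        using l2_pt[OF l2_diff[OF f[of m] f[of n]], of x] by simp
      then show "norm (f m x - f n x) < e" using N \<open>m \<ge> N\<close> \<open>n \<ge> N\<close> by fastforce
    qed
  qed
  define g where "g x = lim (\<lambda>n. f n x)" for x
  have gl: "(\<lambda>n. f n x) \<longlonglongrightarrow> g x" for x
    using cp[of x] unfolding g_def by (simp add: Cauchy_convergent_iff convergent_LIMSEQ_iff)
  have bnd: "(\<lambda>x. f n x - g x) \<in> l2 \<and> l2_norm (\<lambda>x. f n x - g x) \<le> e"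
    if N: "\<forall>m\<ge>N. \<forall>n\<ge>N. l2_norm (\<lambda>x. f m x - f n x) < e" and n: "n \<ge> N" for N n e
  proof (rule l2_bound)
    fix F :: "'a set" assume F: "finite F"
    have lim: "(\<lambda>m. L2_set (\<lambda>x. cmod (f n x - f m x)) F) \<longlonglongrightarrow> L2_set (\<lambda>x. cmod (f n x - g x)) F"
      unfolding L2_set_def by (intro tendsto_real_sqrt tendsto_sum tendsto_power tendsto_norm tendsto_diff tendsto_const gl)
    have "\<forall>m\<ge>N. L2_set (\<lambda>x. cmod (f n x - f m x)) F \<le> e"
    proof (intro allI impI)
      fix m assume "m \<ge> N"
      have "L2_set (\<lambda>x. cmod (f n x - f m x)) F \<le> l2_norm (\<lambda>x. f n x - f m x)"
        using l2_L2F[OF l2_diff[OF f[of n] f[of m]] F] by simp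
      also have "\<dots> < e" using N n \<open>m \<ge> N\<close> by blast
      finally show "L2_set (\<lambda>x. cmod (f n x - f m x)) F \<le> e" by simp
    qed
    then show "L2_set (\<lambda>x. cmod (f n x - g x)) F \<le> e"
      using LIMSEQ_le_const2[OF lim] by blast
  qed
  obtain N0 where N0: "\<forall>m\<ge>N0. \<forall>n\<ge>N0. l2_norm (\<lambda>x. f m x - f n x) < 1" using C[of 1] by auto
  have d0: "(\<lambda>x. f N0 x - g x) \<in> l2" using bnd[OF N0] by auto
  have gl2: "g \<in> l2" using l2_diff[OF f[of N0] d0] by simp
  have "(\<lambda>n. l2_norm (\<lambda>x. f n x - g x)) \<longlonglongrightarrow> 0"
  proof (rule LIMSEQ_I)
    fix r :: real assume "r > 0"
    then obtain N where N: "\<forall>m\<ge>N. \<forall>n\<ge>N. l2_norm (\<lambda>x. f m x - f n x) < r/2" using C[of "r/2"] by auto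
    show "\<exists>no. \<forall>n\<ge>no. norm (l2_norm (\<lambda>x. f n x - g x) - 0) < r"
    proof (intro exI[of _ N] allI impI)
      fix n assume "n \<ge> N"
      then have "l2_norm (\<lambda>x. f n x - g x) \<le> r/2" using bnd[OF N] by blast
      then show "norm (l2_norm (\<lambda>x. f n x - g x) - 0) < r"
        using \<open>r > 0\<close> l2_norm_nonneg[of "\<lambda>x. f n x - g x"] by simp
    qed
  qed
  then show ?thesis using gl2 by blast
qed


lemma children_finite:
  assumes "level_tree lev par" shows "finite (children par x)"
proof (cases "lev x = 0")
  case True then show ?thesis using assms unfolding level_tree_def by auto
next
  case False then show ?thesis using assms unfolding level_tree_def by auto
qed

definition desc :: "('a \<Rightarrow> 'a) \<Rightarrow> 'a \<Rightarrow> 'a set" where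
  "desc par y = {x. \<exists>k. (par ^^ k) x = y}"

lemma lev_funpow:
  assumes "level_tree lev par" shows "lev ((par ^^ k) x) = lev x + k"
  using assms unfolding level_tree_def by (induction k) auto

lemma desc_self: "y \<in> desc par y"
  unfolding desc_def by (auto intro: exI[of _ 0])

lemma desc_lev:
  assumes "level_tree lev par" "x \<in> desc par y" shows "lev x \<le> lev y"
  using assms(2) lev_funpow[OF assms(1)] unfolding desc_def by force

lemma par_notin:
  assumes "level_tree lev par" shows "par y \<notin> desc par y"
proof
  assume "par y \<in> desc par y"
  then have "lev (par y) \<le> lev y" by (rule desc_lev[OF assms])
  moreover have "lev (par y) = Suc (lev y)" using assms unfolding level_tree_def by auto
  ultimately show False by simp
qed

lemma desc_par:
  assumes "x \<in> desc par y" "x \<noteq> y" shows "par x \<in> desc par y"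
proof -
  obtain k where k: "(par ^^ k) x = y" using assms(1) unfolding desc_def by auto
  then obtain j where "k = Suc j" using assms(2) by (cases k) auto
  then have "(par ^^ j) (par x) = y" using k by (simp add: funpow_swap1)
  then show ?thesis unfolding desc_def by auto
qed

lemma desc_child:
  assumes "par c \<in> desc par y" shows "c \<in> desc par y"
proof -
  obtain k where k: "(par ^^ k) (par c) = y" using assms(1) unfolding desc_def by auto
  then have "(par ^^ Suc k) c = y" by (simp add: funpow_swap1)
  then show ?thesis unfolding desc_def by blast
qed

lemma desc_trans:
  assumes "x \<in> desc par y" "y \<in> desc par w" shows "x \<in> desc par w"
proof -
  obtain k where k: "(par ^^ k) x = y" using assms(1) unfolding desc_def by auto
  obtain j where j: "(par ^^ j) y = w" using assms(2) unfolding desc_def by auto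
  have "(par ^^ (j + k)) x = w" using k j by (simp add: funpow_add)
  then show ?thesis unfolding desc_def by blast
qed

lemma desc_decomp: "desc par y = insert y (\<Union>c\<in>children par y. desc par c)"
proof
  show "desc par y \<subseteq> insert y (\<Union>c\<in>children par y. desc par c)"
  proof
    fix x assume "x \<in> desc par y"
    then obtain k where k: "(par ^^ k) x = y" unfolding desc_def by auto
    show "x \<in> insert y (\<Union>c\<in>children par y. desc par c)"
    proof (cases k)
      case 0 then show ?thesis using k by simp
    next
      case (Suc j)
      then have "par ((par ^^ j) x) = y" using k by simp
      then have "(par ^^ j) x \<in> children par y" unfolding children_def by simp
      moreover have "x \<in> desc par ((par ^^ j) x)" unfolding desc_def by blast
      ultimately show ?thesis by blast
    qed
  qed
next
  show "insert y (\<Union>c\<in>children par y. desc par c) \<subseteq> desc par y"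
  proof
    fix x assume "x \<in> insert y (\<Union>c\<in>children par y. desc par c)"
    then show "x \<in> desc par y"
    proof
      assume "x = y" then show ?thesis by (simp add: desc_self)
    next
      assume "x \<in> (\<Union>c\<in>children par y. desc par c)"
      then obtain c where c: "par c = y" "x \<in> desc par c" unfolding children_def by auto
      have "par c \<in> desc par y" using c(1) desc_self[of y par] by simp
      then have "c \<in> desc par y" by (rule desc_child)
      then show ?thesis by (rule desc_trans[OF c(2)])
    qed
  qed
qed

lemma desc_finite:
  assumes T: "level_tree lev par" shows "finite (desc par y)"
proof -
  have "\<forall>y. lev y = n \<longrightarrow> finite (desc par y)" for n
  proof (induction n)
    case 0
    show ?case
    proof (intro allI impI)
      fix y assume "lev y = 0"
      then have "children par y = {}" using T unfolding level_tree_def by auto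
      then show "finite (desc par y)" by (subst desc_decomp) simp
    qed
  next
    case (Suc n)
    show ?case
    proof (intro allI impI)
      fix y assume ly: "lev y = Suc n"
      have "\<forall>c\<in>children par y. finite (desc par c)"
      proof
        fix c assume "c \<in> children par y"
        then have "par c = y" unfolding children_def by simp
        then have "lev c = n" using T ly unfolding level_tree_def by (metis Suc_inject)
        then show "finite (desc par c)" using Suc by blast
      qed
      then show "finite (desc par y)" using children_finite[OF T, of y] by (subst desc_decomp) simp
    qed
  qed
  then show ?thesis by blast
qed

definition sp :: "('a \<Rightarrow> 'a) \<Rightarrow> 'a \<Rightarrow> nat \<Rightarrow> 'a" where
  "sp par x0 n = (par ^^ n) x0"

lemma sp_Suc: "sp par x0 (Suc n) = par (sp par x0 n)"
  unfolding sp_def by simp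

lemma sp_lev: "level_tree lev par \<Longrightarrow> lev x0 = 0 \<Longrightarrow> lev (sp par x0 n) = n"
  unfolding sp_def using lev_funpow[of lev par n x0] by simp

lemma desc_sp_mono: "n \<le> m \<Longrightarrow> desc par (sp par x0 n) \<subseteq> desc par (sp par x0 m)"
proof (induction m)
  case 0 then show ?case by simp
next
  case (Suc m)
  show ?case
  proof (cases "n = Suc m")
    case True then show ?thesis by simp
  next
    case False
    then have "n \<le> m" using Suc.prems by simp
    moreover have "desc par (sp par x0 m) \<subseteq> desc par (sp par x0 (Suc m))"
    proof
      fix x assume "x \<in> desc par (sp par x0 m)"
      moreover have "sp par x0 m \<in> desc par (sp par x0 (Suc m))"
        unfolding sp_Suc by (rule desc_child) (rule desc_self)
      ultimately show "x \<in> desc par (sp par x0 (Suc m))" by (rule desc_trans)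
    qed
    ultimately show ?thesis using Suc.IH by blast
  qed
qed

lemma cover:
  assumes "level_tree lev par" shows "\<exists>m. x \<in> desc par (sp par x0 m)"
proof -
  obtain n m where "(par ^^ n) x = (par ^^ m) x0" using assms unfolding level_tree_def by blast
  then show ?thesis unfolding desc_def sp_def by blast
qed

lemma fin_cover:
  assumes T: "level_tree lev par" and lx: "lev x0 = 0" and F: "finite F"
  shows "\<exists>n. F \<subseteq> desc par (sp par x0 n) \<and> (\<forall>x\<in>F. lev x < n)"
  using F
proof (induction F rule: finite_induct)
  case empty then show ?case by simp
next
  case (insert x F)
  obtain n where n: "F \<subseteq> desc par (sp par x0 n)" "\<forall>x\<in>F. lev x < n" using insert.IH by blast
  obtain m where m: "x \<in> desc par (sp par x0 m)" using cover[OF T] by blast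
  define k where "k = n + m + lev x + 1"
  have "desc par (sp par x0 n) \<subseteq> desc par (sp par x0 k)" "desc par (sp par x0 m) \<subseteq> desc par (sp par x0 k)"
    by (auto intro!: desc_sp_mono simp: k_def)
  then show ?case using n m by (intro exI[of _ k]) (auto simp: k_def)
qed


lemma jacobi_cnj: "jacobi par lam bet (\<lambda>x. cnj (f x)) x = cnj (jacobi par lam bet f x)"
  unfolding jacobi_def by (simp add: cnj_sum)

lemma jacobi_lin: "jacobi par lam bet (\<lambda>x. a * f x + b * g x) x = a * jacobi par lam bet f x + b * jacobi par lam bet g x"
  unfolding jacobi_def by (simp add: sum.distrib sum_distrib_left algebra_simps)

lemma jacobi_diff: "jacobi par lam bet (\<lambda>x. f x - g x) x = jacobi par lam bet f x - jacobi par lam bet g x"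
  using jacobi_lin[of par lam bet 1 f "-1" g x] by simp

lemma jacobi_scale: "jacobi par lam bet (\<lambda>x. a * f x) x = a * jacobi par lam bet f x"
  using jacobi_lin[of par lam bet a f 0 f x] by simp

lemma green_bil:
  assumes T: "level_tree lev par"
  shows "(\<Sum>x\<in>desc par y. jacobi par lam bet f x * g x) =
    (\<Sum>c\<in>desc par y - {y}. complex_of_real (lam c) * (f (par c) * g c + f c * g (par c)))
    + (\<Sum>x\<in>desc par y. complex_of_real (bet x) * f x * g x) + complex_of_real (lam y) * f (par y) * g y"
proof -
  let ?D = "desc par y"
  let ?cf = "complex_of_real"
  have fD: "finite ?D" by (rule desc_finite[OF T])
  have yD: "y \<in> ?D" by (rule desc_self)
  have s1: "(\<Sum>x\<in>?D. ?cf (lam x) * f (par x) * g x) = (\<Sum>x\<in>?D - {y}. ?cf (lam x) * f (par x) * g x) + ?cf (lam y) * f (par y) * g y"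
    using sum.remove[OF fD yD, of "\<lambda>x. ?cf (lam x) * f (par x) * g x"] by simp
  have ch: "{c. c \<in> ?D - {y} \<and> par c = x} = children par x" if "x \<in> ?D" for x
  proof
    show "{c. c \<in> ?D - {y} \<and> par c = x} \<subseteq> children par x" unfolding children_def by auto
    show "children par x \<subseteq> {c. c \<in> ?D - {y} \<and> par c = x}"
    proof
      fix c assume c: "c \<in> children par x"
      then have pc: "par c = x" unfolding children_def by simp
      have cD: "c \<in> ?D" by (rule desc_child) (simp add: pc that)
      have "c \<noteq> y" using pc that par_notin[OF T, of y] by auto
      then show "c \<in> {c. c \<in> ?D - {y} \<and> par c = x}" using cD pc by simp
    qed
  qed
  have im: "par ` (?D - {y}) \<subseteq> ?D"
  proof
    fix w assume "w \<in> par ` (?D - {y})"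
    then obtain c where c: "c \<in> ?D" "c \<noteq> y" "w = par c" by blast
    show "w \<in> ?D" unfolding c(3) by (rule desc_par[OF c(1,2)])
  qed
  have s2: "(\<Sum>x\<in>?D. (\<Sum>c\<in>children par x. ?cf (lam c) * f c) * g x) = (\<Sum>c\<in>?D - {y}. ?cf (lam c) * f c * g (par c))"
  proof -
    have "(\<Sum>x\<in>?D. (\<Sum>c\<in>children par x. ?cf (lam c) * f c) * g x) = (\<Sum>x\<in>?D. \<Sum>c\<in>{c. c \<in> ?D - {y} \<and> par c = x}. ?cf (lam c) * f c * g (par c))"
    proof (rule sum.cong[OF refl])
      fix x assume xD: "x \<in> ?D"
      have "(\<Sum>c\<in>children par x. ?cf (lam c) * f c) * g x = (\<Sum>c\<in>children par x. ?cf (lam c) * f c * g (par c))"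
        by (simp add: sum_distrib_right children_def)
      then show "(\<Sum>c\<in>children par x. ?cf (lam c) * f c) * g x = (\<Sum>c\<in>{c. c \<in> ?D - {y} \<and> par c = x}. ?cf (lam c) * f c * g (par c))"
        using ch[OF xD] by simp
    qed
    also have "\<dots> = (\<Sum>c\<in>?D - {y}. ?cf (lam c) * f c * g (par c))"
      by (rule sum.group) (use fD im in auto)
    finally show ?thesis .
  qed
  have "(\<Sum>x\<in>?D. jacobi par lam bet f x * g x) = (\<Sum>x\<in>?D. ?cf (lam x) * f (par x) * g x) + (\<Sum>x\<in>?D. ?cf (bet x) * f x * g x)
      + (\<Sum>x\<in>?D. (\<Sum>c\<in>children par x. ?cf (lam c) * f c) * g x)"
    unfolding jacobi_def by (simp add: sum.distrib distrib_right)
  also have "\<dots> = (\<Sum>c\<in>?D - {y}. ?cf (lam c) * (f (par c) * g c + f c * g (par c)))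
    + (\<Sum>x\<in>?D. ?cf (bet x) * f x * g x) + ?cf (lam y) * f (par y) * g y"
    unfolding s1 s2 by (simp add: sum.distrib distrib_left algebra_simps)
  finally show ?thesis .
qed

lemma green_im:
  assumes T: "level_tree lev par"
  shows "Im (\<Sum>x\<in>desc par y. jacobi par lam bet f x * cnj (f x)) = lam y * Im (f (par y) * cnj (f y))"
proof -
  have a: "Im (complex_of_real (lam c) * (f (par c) * cnj (f c) + f c * cnj (f (par c)))) = 0" for c
    by (simp add: algebra_simps)
  have b: "Im (complex_of_real (bet x) * f x * cnj (f x)) = 0" for x
    by (simp add: algebra_simps)
  have A: "Im (\<Sum>c\<in>desc par y - {y}. complex_of_real (lam c) * (f (par c) * cnj (f c) + f c * cnj (f (par c)))) = 0"
    unfolding Im_sum a by simp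
  have B: "Im (\<Sum>x\<in>desc par y. complex_of_real (bet x) * f x * cnj (f x)) = 0"
    unfolding Im_sum b by simp
  have C: "Im (complex_of_real (lam y) * f (par y) * cnj (f y)) = lam y * Im (f (par y) * cnj (f y))"
    by (simp add: mult.assoc)
  show ?thesis
    unfolding green_bil[OF T, where y=y and lam=lam and bet=bet and f=f and g="\<lambda>x. cnj (f x)"]
    unfolding plus_complex.sel A B C by simp
qed


lemma jac_zero_outside:
  assumes t: "\<And>x. x \<notin> Fs \<Longrightarrow> t x = 0" and s1: "Fs \<subseteq> desc par y" and s2: "par ` Fs \<subseteq> desc par y"
    and x: "x \<notin> desc par y"
  shows "jacobi par lam bet t x = 0"
proof -
  have a: "t (par x) = 0"
  proof (rule ccontr)
    assume "t (par x) \<noteq> 0"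
    then have "par x \<in> Fs" using t by blast
    then have "par x \<in> desc par y" using s1 by blast
    then have "x \<in> desc par y" by (rule desc_child)
    then show False using x by simp
  qed
  have b: "t x = 0" using t s1 x by blast
  have c: "t c = 0" if "c \<in> children par x" for c
  proof (rule ccontr)
    assume "t c \<noteq> 0"
    then have "c \<in> Fs" using t by blast
    then have "par c \<in> desc par y" using s2 by blast
    then show False using that x unfolding children_def by simp
  qed
  have d: "(\<Sum>c\<in>children par x. complex_of_real (lam c) * t c) = 0"
    by (rule sum.neutral) (use c in simp)
  show ?thesis unfolding jacobi_def a b d by simp
qed

lemma good_y:
  assumes T: "level_tree lev par" and lx: "lev x0 = 0" and F: "finite Fs" and t: "\<And>x. x \<notin> Fs \<Longrightarrow> t x = 0"
  shows "\<exists>y. Fs \<subseteq> desc par y \<and> x0 \<in> desc par y \<and> t y = 0 \<and> t (par y) = 0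
     \<and> (\<forall>x. x \<notin> desc par y \<longrightarrow> jacobi par lam bet t x = 0)"
proof -
  have "finite (insert x0 (Fs \<union> par ` Fs))" using F by simp
  then obtain n where n: "insert x0 (Fs \<union> par ` Fs) \<subseteq> desc par (sp par x0 n)"
    "\<forall>x\<in>insert x0 (Fs \<union> par ` Fs). lev x < n"
    using fin_cover[OF T lx] by blast
  let ?y = "sp par x0 n"
  have ly: "lev ?y = n" by (rule sp_lev[OF T lx])
  have lpy: "lev (par ?y) = Suc n" using T ly unfolding level_tree_def by simp
  have "?y \<notin> Fs"
  proof
    assume "?y \<in> Fs" then have "lev ?y < n" using n(2) by blast
    then show False using ly by simp
  qed
  then have ty: "t ?y = 0" using t by blast
  have "par ?y \<notin> Fs"
  proof
    assume "par ?y \<in> Fs" then have "lev (par ?y) < n" using n(2) by blast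
    then show False using lpy by simp
  qed
  then have tpy: "t (par ?y) = 0" using t by blast
  have s1: "Fs \<subseteq> desc par ?y" using n(1) by (simp add: subset_iff)
  have s2: "par ` Fs \<subseteq> desc par ?y" using n(1) by (simp add: subset_iff)
  have "\<forall>x. x \<notin> desc par ?y \<longrightarrow> jacobi par lam bet t x = 0"
  proof (intro allI impI)
    fix x assume "x \<notin> desc par ?y"
    then show "jacobi par lam bet t x = 0"
      apply (rule jac_zero_outside[where par=par and y="?y" and Fs=Fs and t=t, rotated 3])
      using t s1 s2 by auto
  qed
  then show ?thesis using n(1) ty tpy by (intro exI[of _ ?y]) auto
qed

lemma J_sym_y:
  assumes T: "level_tree lev par" and ty: "t y = 0" "t (par y) = 0"
  shows "(\<Sum>x\<in>desc par y. r x * jacobi par lam bet t x) = (\<Sum>x\<in>desc par y. jacobi par lam bet r x * t x)"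
proof -
  have "(\<Sum>x\<in>desc par y. r x * jacobi par lam bet t x) = (\<Sum>x\<in>desc par y. jacobi par lam bet t x * r x)"
    by (simp add: mult.commute)
  also have "\<dots> = (\<Sum>c\<in>desc par y - {y}. complex_of_real (lam c) * (t (par c) * r c + t c * r (par c)))
    + (\<Sum>x\<in>desc par y. complex_of_real (bet x) * t x * r x)"
    using green_bil[OF T, where y=y and lam=lam and bet=bet and f=t and g=r] ty by simp
  also have "\<dots> = (\<Sum>c\<in>desc par y - {y}. complex_of_real (lam c) * (r (par c) * t c + r c * t (par c)))
    + (\<Sum>x\<in>desc par y. complex_of_real (bet x) * r x * t x)"
    by (simp add: algebra_simps)
  also have "\<dots> = (\<Sum>x\<in>desc par y. jacobi par lam bet r x * t x)"
    using green_bil[OF T, where y=y and lam=lam and bet=bet and f=r and g=t] ty by simp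
  finally show ?thesis .
qed

lemma sum_single:
  assumes "finite D" "a \<in> D" "\<And>x. x \<in> D \<Longrightarrow> x \<noteq> a \<Longrightarrow> h x = 0"
  shows "sum h D = h a"
proof -
  have "sum h D = h a + sum h (D - {a})" using sum.remove[OF assms(1,2)] .
  also have "sum h (D - {a}) = 0" using assms(3) by (intro sum.neutral) auto
  finally show ?thesis by simp
qed

lemma sum_cnorm: "(\<Sum>x\<in>D. f x * cnj (f x)) = complex_of_real (\<Sum>x\<in>D. (cmod (f x))\<^sup>2)"
proof -
  have "(\<Sum>x\<in>D. f x * cnj (f x)) = (\<Sum>x\<in>D. complex_of_real ((cmod (f x))\<^sup>2))"
    by (rule sum.cong[OF refl]) (rule complex_norm_square[symmetric])
  also have "\<dots> = complex_of_real (\<Sum>x\<in>D. (cmod (f x))\<^sup>2)" by (rule of_real_sum[symmetric])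
  finally show ?thesis .
qed

lemma eig_zero_desc:
  assumes T: "level_tree lev par" and z: "Im z \<noteq> 0"
    and eq: "\<And>x. x \<in> desc par y \<Longrightarrow> jacobi par lam bet w x = z * w x"
    and b: "w (par y) = 0 \<or> w y = 0"
  shows "\<forall>x\<in>desc par y. w x = 0"
proof -
  let ?D = "desc par y"
  have fD: "finite ?D" by (rule desc_finite[OF T])
  have "(\<Sum>x\<in>?D. jacobi par lam bet w x * cnj (w x)) = (\<Sum>x\<in>?D. z * (w x * cnj (w x)))"
    using eq by (intro sum.cong) auto
  also have "\<dots> = z * complex_of_real (\<Sum>x\<in>?D. (cmod (w x))\<^sup>2)"
    by (simp add: sum_distrib_left[symmetric] sum_cnorm)
  finally have e: "(\<Sum>x\<in>?D. jacobi par lam bet w x * cnj (w x)) = z * complex_of_real (\<Sum>x\<in>?D. (cmod (w x))\<^sup>2)" .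
  have "Im (\<Sum>x\<in>?D. jacobi par lam bet w x * cnj (w x)) = 0"
    unfolding green_im[OF T] using b by auto
  then have "Im z * (\<Sum>x\<in>?D. (cmod (w x))\<^sup>2) = 0" unfolding e by simp
  then have "(\<Sum>x\<in>?D. (cmod (w x))\<^sup>2) = 0" using z by simp
  then have "\<forall>x\<in>?D. (cmod (w x))\<^sup>2 = 0" using sum_nonneg_eq_0_iff[OF fD, of "\<lambda>x. (cmod (w x))\<^sup>2"] by simp
  then show ?thesis by simp
qed

lemma eig_x0:
  assumes T: "level_tree lev par" and lp: "\<And>x. lam x > 0" and lx: "lev x0 = 0" and z: "Im z \<noteq> 0"
    and eq: "\<And>x. jacobi par lam bet w x = z * w x" and w0: "w x0 = 0"
  shows "w = (\<lambda>x. 0)"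
proof -
  have P: "\<forall>x\<in>desc par (sp par x0 n). w x = 0" for n
  proof (induction n)
    case 0
    have "\<forall>x\<in>desc par x0. w x = 0"
      by (rule eig_zero_desc[OF T z, of "x0" lam bet w]) (use eq w0 in auto)
    then show ?case unfolding sp_def by simp
  next
    case (Suc n)
    let ?y = "sp par x0 n"
    have yin: "?y \<in> desc par ?y" by (rule desc_self)
    have wy: "w ?y = 0" using Suc.IH yin by blast
    have Jy: "jacobi par lam bet w ?y = 0" using eq[of ?y] wy by simp
    have ch: "\<forall>c\<in>children par ?y. w c = 0"
    proof
      fix c assume "c \<in> children par ?y"
      then have "par c = ?y" unfolding children_def by simp
      then have "par c \<in> desc par ?y" using yin by simp
      then have "c \<in> desc par ?y" by (rule desc_child)
      then show "w c = 0" using Suc.IH by blast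
    qed
    have s0: "(\<Sum>c\<in>children par ?y. complex_of_real (lam c) * w c) = 0"
      by (rule sum.neutral) (use ch in simp)
    have "complex_of_real (lam ?y) * w (par ?y) = 0"
      using Jy unfolding jacobi_def s0 wy by simp
    then have "w (par ?y) = 0" using lp[of ?y] by simp
    then have "w (sp par x0 (Suc n)) = 0" by (simp add: sp_Suc)
    then show ?case
      by (intro eig_zero_desc[OF T z, of "sp par x0 (Suc n)" lam bet w]) (use eq in auto)
  qed
  show ?thesis
  proof
    fix x
    obtain m where "x \<in> desc par (sp par x0 m)" using cover[OF T] by blast
    then show "w x = 0" using P by blast
  qed
qed

lemma x0_in: "x0 \<in> desc par (sp par x0 n)"
  unfolding desc_def sp_def by blast

lemma L2_set_subset: "finite D \<Longrightarrow> F \<subseteq> D \<Longrightarrow> L2_set f F \<le> L2_set f D"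
  unfolding L2_set_def by (intro real_sqrt_le_mono sum_mono2) auto


lemma real_bound_lemma:
  fixes c S G K :: real
  assumes c: "c > 0" and G: "G \<ge> 0" and K: "K \<ge> 0" and h1: "c * S \<le> K * G" and h2: "G\<^sup>2 \<le> S"
  shows "G \<le> K / c \<and> sqrt S \<le> K / c"
proof -
  have "c * G\<^sup>2 \<le> K * G" using h1 h2 c by (smt (verit) mult_left_mono)
  then have GK: "c * G \<le> K"
  proof (cases "G = 0")
    case True then show ?thesis using K by simp
  next
    case False then have "G > 0" using G by simp
    then show ?thesis using \<open>c * G\<^sup>2 \<le> K * G\<close> by (simp add: power2_eq_square mult.assoc[symmetric])
  qed
  then have g: "G \<le> K / c" using c by (simp add: field_simps)
  have "c * S \<le> K * (K / c)" using h1 g K by (smt (verit) mult_left_mono)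
  then have "S \<le> (K / c)\<^sup>2" using c by (simp add: field_simps power2_eq_square)
  then have "sqrt S \<le> K / c" using c K by (simp add: real_sqrt_le_iff real_le_lsqrt) 
  then show ?thesis using g by simp
qed

lemma partB:
  assumes T: "level_tree lev par" and lx: "lev x0 = 0" and z: "Im z \<noteq> 0"
    and w: "w \<in> l2" and weq: "\<And>x. jacobi par lam bet w x = z * w x" and w0: "w x0 \<noteq> 0"
    and ueq: "\<And>x. x \<noteq> x0 \<Longrightarrow> jacobi par lam bet u x = z * u x" and u0: "u x0 = 0"
  shows "u \<in> l2"
proof -
  define \<kappa> where "\<kappa> = jacobi par lam bet u x0 - z * u x0"
  define c where "c = \<bar>Im z\<bar>"
  define K where "K = cmod \<kappa>"
  have c0: "c > 0" using z unfolding c_def by simp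
  have K0: "K \<ge> 0" unfolding K_def by simp
  define B where "B = K / c + K / (c * cmod (w x0)) * l2_norm w"
  have main: "L2_set (\<lambda>x. cmod (u x)) (desc par (sp par x0 n)) \<le> B" for n
  proof -
    let ?y = "sp par x0 n"
    let ?D = "desc par ?y"
    have fD: "finite ?D" by (rule desc_finite[OF T])
    have x0D: "x0 \<in> ?D" unfolding desc_def sp_def by blast
    have wpy: "w (par ?y) \<noteq> 0"
    proof
      assume "w (par ?y) = 0"
      then have "\<forall>x\<in>?D. w x = 0" by (intro eig_zero_desc[OF T z]) (use weq in auto)
      then show False using x0D w0 by blast
    qed
    define a where "a = - u (par ?y) / w (par ?y)"
    define g where "g x = u x + a * w x" for x
    have gpy: "g (par ?y) = 0" unfolding g_def a_def using wpy by (simp add: field_simps)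
    have Jg: "jacobi par lam bet g x = jacobi par lam bet u x + a * jacobi par lam bet w x" for x
      unfolding g_def using jacobi_lin[of par lam bet 1 u a w x] by simp
    define h where "h x = (jacobi par lam bet g x - z * g x) * cnj (g x)" for x
    have hz: "h x = 0" if "x \<in> ?D" "x \<noteq> x0" for x
      unfolding h_def Jg using ueq[OF that(2)] weq[of x] by (simp add: g_def algebra_simps)
    have hx0: "h x0 = \<kappa> * cnj (g x0)"
      unfolding h_def Jg \<kappa>_def using weq[of x0] by (simp add: g_def algebra_simps)
    define S where "S = (\<Sum>x\<in>?D. (cmod (g x))\<^sup>2)"
    have "sum h ?D = h x0" by (rule sum_single[OF fD x0D hz])
    moreover have "sum h ?D = (\<Sum>x\<in>?D. jacobi par lam bet g x * cnj (g x)) - z * complex_of_real S"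
    proof -
      have "sum h ?D = (\<Sum>x\<in>?D. jacobi par lam bet g x * cnj (g x) - z * (g x * cnj (g x)))"
        unfolding h_def by (rule sum.cong) (auto simp: algebra_simps)
      also have "\<dots> = (\<Sum>x\<in>?D. jacobi par lam bet g x * cnj (g x)) - z * (\<Sum>x\<in>?D. g x * cnj (g x))"
        by (simp add: sum_subtractf sum_distrib_left)
      finally show ?thesis unfolding S_def sum_cnorm .
    qed
    ultimately have E: "\<kappa> * cnj (g x0) = (\<Sum>x\<in>?D. jacobi par lam bet g x * cnj (g x)) - z * complex_of_real S"
      using hx0 by simp
    have "Im (\<Sum>x\<in>?D. jacobi par lam bet g x * cnj (g x)) = 0"
      unfolding green_im[OF T] gpy by simp
    then have ImE: "Im (\<kappa> * cnj (g x0)) = - Im z * S"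
      using arg_cong[OF E, of Im] by simp
    have "c * S \<le> K * cmod (g x0)"
    proof -
      have "c * S = \<bar>Im (\<kappa> * cnj (g x0))\<bar>"
        unfolding ImE c_def S_def by (simp add: abs_mult sum_nonneg)
      also have "\<dots> \<le> cmod (\<kappa> * cnj (g x0))" by (rule abs_Im_le_cmod)
      also have "\<dots> = K * cmod (g x0)" unfolding K_def by (simp add: norm_mult)
      finally show ?thesis .
    qed
    moreover have "(cmod (g x0))\<^sup>2 \<le> S"
      unfolding S_def by (rule member_le_sum[OF x0D]) (auto simp: fD)
    ultimately have RB: "cmod (g x0) \<le> K / c \<and> sqrt S \<le> K / c"
      by (rule real_bound_lemma[OF c0 norm_ge_zero K0])
    have gx0: "g x0 = a * w x0" unfolding g_def u0 by simp
    have am: "cmod a * cmod (w x0) \<le> K / c" using RB unfolding gx0 by (simp add: norm_mult)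
    have m: "cmod (w x0) > 0" using w0 by simp
    have "cmod a \<le> (K / c) / cmod (w x0)" using am pos_le_divide_eq[OF m] by blast
    then have aB: "cmod a \<le> K / (c * cmod (w x0))" by (simp add: divide_divide_eq_left)
    have "L2_set (\<lambda>x. cmod (u x)) ?D \<le> L2_set (\<lambda>x. cmod (g x) + cmod a * cmod (w x)) ?D"
    proof (rule L2_set_mono)
      fix x
      have "u x = g x - a * w x" unfolding g_def by simp
      then show "cmod (u x) \<le> cmod (g x) + cmod a * cmod (w x)"
        by (metis norm_mult norm_triangle_ineq4)
    qed simp
    also have "\<dots> \<le> L2_set (\<lambda>x. cmod (g x)) ?D + L2_set (\<lambda>x. cmod a * cmod (w x)) ?D"
      by (rule L2_set_triangle_ineq)
    also have "L2_set (\<lambda>x. cmod a * cmod (w x)) ?D = cmod a * L2_set (\<lambda>x. cmod (w x)) ?D"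
      by (rule L2_set_right_distrib[symmetric]) simp
    also have "L2_set (\<lambda>x. cmod (g x)) ?D = sqrt S" unfolding L2_set_def S_def by simp
    also have "cmod a * L2_set (\<lambda>x. cmod (w x)) ?D \<le> K / (c * cmod (w x0)) * l2_norm w"
      using aB l2_L2F[OF w fD] K0 c0 m by (intro mult_mono) (auto simp: l2_norm_nonneg)
    finally show ?thesis unfolding B_def using RB by simp
  qed
  have "u \<in> l2 \<and> l2_norm u \<le> B"
  proof (rule l2_bound)
    fix F :: "'a set" assume F: "finite F"
    obtain n where n: "F \<subseteq> desc par (sp par x0 n)" using fin_cover[OF T lx F] by blast
    have "L2_set (\<lambda>x. cmod (u x)) F \<le> L2_set (\<lambda>x. cmod (u x)) (desc par (sp par x0 n))"
      by (rule L2_set_subset[OF desc_finite[OF T] n])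
    also have "\<dots> \<le> B" by (rule main)
    finally show "L2_set (\<lambda>x. cmod (u x)) F \<le> B" .
  qed
  then show ?thesis by simp
qed


lemma pw_conv:
  assumes f: "f \<in> l2" and v: "\<And>n. v n \<in> l2" and lim: "(\<lambda>n. l2_norm (\<lambda>x. v n x - f x)) \<longlonglongrightarrow> 0"
  shows "(\<lambda>n. v n x) \<longlonglongrightarrow> f x"
proof -
  have "(\<lambda>n. v n x - f x) \<longlonglongrightarrow> 0"
  proof (rule Lim_null_comparison[OF _ lim])
    show "\<forall>\<^sub>F n in sequentially. norm (v n x - f x) \<le> l2_norm (\<lambda>x. v n x - f x)"
      using l2_pt[OF l2_diff[OF v f]] by simp
  qed
  then show ?thesis by (rule LIM_zero_cancel)
qed

lemma fin_supp_J:
  assumes T: "level_tree lev par" and lx: "lev x0 = 0" and v: "v \<in> fin_supp"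
  shows "jacobi par lam bet v \<in> fin_supp"
proof -
  have F: "finite {x. v x \<noteq> 0}" using v unfolding fin_supp_def by simp
  obtain y where y: "\<forall>x. x \<notin> desc par y \<longrightarrow> jacobi par lam bet v x = 0"
    using good_y[OF T lx F, of v lam bet] by blast
  have "{x. jacobi par lam bet v x \<noteq> 0} \<subseteq> desc par y" using y by blast
  then show ?thesis unfolding fin_supp_def using desc_finite[OF T] finite_subset by blast
qed

lemma fin_supp_lin:
  assumes "v \<in> fin_supp" "w \<in> fin_supp"
  shows "(\<lambda>x. a * v x + b * w x) \<in> fin_supp"
proof -
  have "{x. a * v x + b * w x \<noteq> 0} \<subseteq> {x. v x \<noteq> 0} \<union> {x. w x \<noteq> 0}" by auto
  then show ?thesis using assms unfolding fin_supp_def using finite_subset by blast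
qed

lemma delta_fin: "(\<lambda>y. if y = x then 1 else 0) \<in> fin_supp"
proof -
  have "{y. (if y = x then 1 else 0::complex) \<noteq> 0} = {x}" by auto
  then show ?thesis unfolding fin_supp_def by simp
qed

lemma innerJ:
  assumes T: "level_tree lev par" and lx: "lev x0 = 0" and b: "b \<in> fin_supp"
    and g: "\<And>x. g x = jacobi par lam bet w x"
  shows "l2_inner (jacobi par lam bet b) w = l2_inner b g"
proof -
  have F: "finite {x. b x \<noteq> 0}" using b unfolding fin_supp_def by simp
  obtain y where y: "{x. b x \<noteq> 0} \<subseteq> desc par y" "b y = 0" "b (par y) = 0"
    "\<forall>x. x \<notin> desc par y \<longrightarrow> jacobi par lam bet b x = 0"
    using good_y[OF T lx F, of b lam bet] by auto
  let ?D = "desc par y"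
  have fD: "finite ?D" by (rule desc_finite[OF T])
  have "l2_inner (jacobi par lam bet b) w = (\<Sum>x\<in>?D. jacobi par lam bet b x * cnj (w x))"
    unfolding l2_inner_def by (rule fin_infsum[THEN conjunct2, OF fD]) (use y(4) in simp)
  also have "\<dots> = (\<Sum>x\<in>?D. cnj (w x) * jacobi par lam bet b x)" by (simp add: mult.commute)
  also have "\<dots> = (\<Sum>x\<in>?D. jacobi par lam bet (\<lambda>x. cnj (w x)) x * b x)"
    by (rule J_sym_y[OF T y(2,3)])
  also have "\<dots> = (\<Sum>x\<in>?D. b x * cnj (g x))" unfolding jacobi_cnj g by (simp add: mult.commute)
  also have "\<dots> = l2_inner b g"
    unfolding l2_inner_def using y(1) by (intro fin_infsum[THEN conjunct2, OF fD, symmetric]) auto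
  finally show ?thesis .
qed

lemma inner_self: "f \<in> l2 \<Longrightarrow> l2_inner f f = complex_of_real ((l2_norm f)\<^sup>2)"
proof -
  assume f: "f \<in> l2"
  have s: "(\<lambda>x. (cmod (f x))\<^sup>2) summable_on UNIV" using f unfolding l2_def by simp
  have "l2_inner f f = infsum (\<lambda>x. complex_of_real ((cmod (f x))\<^sup>2)) UNIV"
    unfolding l2_inner_def by (simp only: complex_norm_square)
  also have "\<dots> = complex_of_real (N2 f)"
    by (rule infsumI[OF has_sum_of_real[OF has_sum_infsum[OF s]]])
  finally show ?thesis by (simp add: l2_norm_sq)
qed

lemma clos_pt:
  assumes T: "level_tree lev par" and lx: "lev x0 = 0"
    and fg: "(f, g) \<in> closure_graph (jacobi_graph par lam bet)"
  shows "g x = jacobi par lam bet f x"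
proof -
  obtain s where s: "\<forall>n. s n \<in> jacobi_graph par lam bet"
    "(\<lambda>n. l2_norm (\<lambda>x. fst (s n) x - f x)) \<longlonglongrightarrow> 0"
    "(\<lambda>n. l2_norm (\<lambda>x. snd (s n) x - g x)) \<longlonglongrightarrow> 0" and fl: "f \<in> l2" and gl: "g \<in> l2"
    using fg unfolding closure_graph_def by auto
  define v where "v n = fst (s n)" for n
  have sn: "snd (s n) = jacobi par lam bet (v n)" "v n \<in> fin_supp" for n
    using s(1)[rule_format, of n] unfolding jacobi_graph_def v_def by auto
  have l1: "v n \<in> l2" for n using sn(2) by (rule fin_supp_l2)
  have l2': "jacobi par lam bet (v n) \<in> l2" for n
    by (rule fin_supp_l2[OF fin_supp_J[OF T lx sn(2)]])
  have c1: "(\<lambda>n. v n y) \<longlonglongrightarrow> f y" for y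
    by (rule pw_conv[OF fl l1]) (use s(2) in \<open>simp add: v_def\<close>)
  have c2: "(\<lambda>n. jacobi par lam bet (v n) x) \<longlonglongrightarrow> g x"
    by (rule pw_conv[OF gl l2']) (use s(3) sn(1) in simp)
  have c3: "(\<lambda>n. jacobi par lam bet (v n) x) \<longlonglongrightarrow> jacobi par lam bet f x"
    unfolding jacobi_def
    by (intro tendsto_add tendsto_mult tendsto_const tendsto_sum c1)
  show ?thesis using LIMSEQ_unique[OF c2 c3] .
qed

lemma G_sub:
  assumes T: "level_tree lev par" and lx: "lev x0 = 0" and v: "v \<in> fin_supp"
  shows "(v, jacobi par lam bet v) \<in> closure_graph (jacobi_graph par lam bet)"
proof -
  have z: "l2_norm (\<lambda>x. 0) = 0" unfolding l2_norm_def by simp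
  show ?thesis unfolding closure_graph_def
    using fin_supp_l2[OF v] fin_supp_l2[OF fin_supp_J[OF T lx v]] v
    by (auto intro!: exI[of _ "\<lambda>n. (v, jacobi par lam bet v)"] simp: jacobi_graph_def z)
qed

lemma LB:
  assumes T: "level_tree lev par" and lx: "lev x0 = 0" and f: "f \<in> fin_supp"
  shows "\<bar>Im z\<bar> * l2_norm f \<le> l2_norm (\<lambda>x. jacobi par lam bet f x - z * f x)"
proof -
  have fl: "f \<in> l2" by (rule fin_supp_l2[OF f])
  have Jl: "jacobi par lam bet f \<in> l2" by (rule fin_supp_l2[OF fin_supp_J[OF T lx f]])
  have zf: "(\<lambda>x. z * f x) \<in> l2" using l2_scale[OF fl] by blast
  have e1: "l2_inner (jacobi par lam bet f) f = l2_inner f (jacobi par lam bet f)"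
    by (rule innerJ[OF T lx f]) simp
  have cj: "l2_inner f (jacobi par lam bet f) = cnj (l2_inner (jacobi par lam bet f) f)"
    unfolding l2_inner_def by (simp flip: infsum_cnj add: mult.commute)
  have Im0: "Im (l2_inner (jacobi par lam bet f) f) = 0"
    using e1 cj by (metis cnj.simps(2) neg_equal_zero)
  have sz: "l2_inner (\<lambda>x. z * f x) f = z * l2_inner f f"
    unfolding l2_inner_def using l2_CS[OF fl fl]
    by (simp add: mult.assoc infsum_cmult_right)
  have "l2_inner (\<lambda>x. jacobi par lam bet f x - z * f x) f = l2_inner (jacobi par lam bet f) f - z * complex_of_real ((l2_norm f)\<^sup>2)"
    using l2_inner_diff_left[OF Jl zf fl] sz inner_self[OF fl] by simp
  then have "Im (l2_inner (\<lambda>x. jacobi par lam bet f x - z * f x) f) = - Im z * (l2_norm f)\<^sup>2"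
    using Im0 by simp
  then have "\<bar>Im z\<bar> * (l2_norm f)\<^sup>2 \<le> cmod (l2_inner (\<lambda>x. jacobi par lam bet f x - z * f x) f)"
    by (metis abs_Im_le_cmod abs_minus_cancel abs_mult abs_of_nonneg mult_minus_left zero_le_power2)
  also have "\<dots> \<le> l2_norm (\<lambda>x. jacobi par lam bet f x - z * f x) * l2_norm f"
    using l2_CS[OF l2_diff[OF Jl zf] fl] by blast
  finally have ineq: "\<bar>Im z\<bar> * (l2_norm f)\<^sup>2 \<le> l2_norm (\<lambda>x. jacobi par lam bet f x - z * f x) * l2_norm f" .
  show ?thesis
  proof (cases "l2_norm f = 0")
    case True then show ?thesis using l2_norm_nonneg by simp
  next
    case False then have "l2_norm f > 0" using l2_norm_nonneg[of f] by simp
    then show ?thesis using ineq by (simp add: power2_eq_square mult.assoc[symmetric])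
  qed
qed

lemma expand_norm:
  assumes r: "r \<in> l2" and m: "m \<in> l2"
  shows "(l2_norm (\<lambda>x. r x - t * m x))\<^sup>2 = (l2_norm r)\<^sup>2 - 2 * Re (cnj t * l2_inner r m) + (cmod t)\<^sup>2 * (l2_norm m)\<^sup>2"
proof -
  have pt: "(cmod (r x - t * m x))\<^sup>2 = (cmod (r x))\<^sup>2 + (-2) * Re (cnj t * (r x * cnj (m x))) + (cmod t)\<^sup>2 * (cmod (m x))\<^sup>2" for x
    unfolding cmod_power2 by (simp add: power2_eq_square algebra_simps)
  have s1: "(\<lambda>x. (cmod (r x))\<^sup>2) summable_on UNIV" using r unfolding l2_def by simp
  have s3: "(\<lambda>x. (cmod (m x))\<^sup>2) summable_on UNIV" using m unfolding l2_def by simp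
  have sc: "(\<lambda>x. r x * cnj (m x)) summable_on UNIV" using l2_CS[OF r m] by blast
  have sc2: "(\<lambda>x. cnj t * (r x * cnj (m x))) summable_on UNIV" using summable_on_cmult_right[OF sc] by blast
  have s2: "(\<lambda>x. Re (cnj t * (r x * cnj (m x)))) summable_on UNIV" by (rule summable_on_Re[OF sc2])
  have i1: "infsum (\<lambda>x. cnj t * (r x * cnj (m x))) UNIV = cnj t * l2_inner r m"
    unfolding l2_inner_def by (rule infsum_cmult_right) (rule sc)
  have i2: "infsum (\<lambda>x. Re (cnj t * (r x * cnj (m x)))) UNIV = Re (cnj t * l2_inner r m)"
    unfolding infsum_Re[OF sc2] i1 ..
  have s2': "(\<lambda>x. (-2) * Re (cnj t * (r x * cnj (m x)))) summable_on UNIV"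
    by (rule summable_on_cmult_right[OF s2])
  have s3': "(\<lambda>x. (cmod t)\<^sup>2 * (cmod (m x))\<^sup>2) summable_on UNIV"
    by (rule summable_on_cmult_right[OF s3])
  have "N2 (\<lambda>x. r x - t * m x) = infsum (\<lambda>x. (cmod (r x))\<^sup>2 + (-2) * Re (cnj t * (r x * cnj (m x))) + (cmod t)\<^sup>2 * (cmod (m x))\<^sup>2) UNIV"
    unfolding pt ..
  also have "\<dots> = N2 r + infsum (\<lambda>x. (-2) * Re (cnj t * (r x * cnj (m x)))) UNIV + infsum (\<lambda>x. (cmod t)\<^sup>2 * (cmod (m x))\<^sup>2) UNIV"
    using infsum_add[OF summable_on_add[OF s1 s2'] s3'] infsum_add[OF s1 s2'] by simp
  also have "infsum (\<lambda>x. (-2) * Re (cnj t * (r x * cnj (m x)))) UNIV = (-2) * Re (cnj t * l2_inner r m)"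
    unfolding i2[symmetric] by (rule infsum_cmult_right) (rule s2)
  also have "infsum (\<lambda>x. (cmod t)\<^sup>2 * (cmod (m x))\<^sup>2) UNIV = (cmod t)\<^sup>2 * N2 m"
    by (rule infsum_cmult_right) (rule s3)
  finally show ?thesis unfolding l2_norm_sq by simp
qed

lemma parallelogram:
  assumes a: "a \<in> l2" and b: "b \<in> l2"
  shows "(l2_norm (\<lambda>x. a x + b x))\<^sup>2 + (l2_norm (\<lambda>x. a x - b x))\<^sup>2 = 2 * (l2_norm a)\<^sup>2 + 2 * (l2_norm b)\<^sup>2"
proof -
  have pt: "(cmod (a x + b x))\<^sup>2 + (cmod (a x - b x))\<^sup>2 = 2 * (cmod (a x))\<^sup>2 + 2 * (cmod (b x))\<^sup>2" for x
    unfolding cmod_power2 by (simp add: power2_eq_square algebra_simps)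
  have s1: "(\<lambda>x. (cmod (a x + b x))\<^sup>2) summable_on UNIV" using l2_add[OF a b] unfolding l2_def by simp
  have s2: "(\<lambda>x. (cmod (a x - b x))\<^sup>2) summable_on UNIV" using l2_diff[OF a b] unfolding l2_def by simp
  have s3: "(\<lambda>x. (cmod (a x))\<^sup>2) summable_on UNIV" using a unfolding l2_def by simp
  have s4: "(\<lambda>x. (cmod (b x))\<^sup>2) summable_on UNIV" using b unfolding l2_def by simp
  have "N2 (\<lambda>x. a x + b x) + N2 (\<lambda>x. a x - b x) = infsum (\<lambda>x. (cmod (a x + b x))\<^sup>2 + (cmod (a x - b x))\<^sup>2) UNIV"
    using infsum_add[OF s1 s2] by simp
  also have "\<dots> = infsum (\<lambda>x. 2 * (cmod (a x))\<^sup>2 + 2 * (cmod (b x))\<^sup>2) UNIV" unfolding pt ..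
  also have "\<dots> = infsum (\<lambda>x. 2 * (cmod (a x))\<^sup>2) UNIV + infsum (\<lambda>x. 2 * (cmod (b x))\<^sup>2) UNIV"
    by (rule infsum_add) (auto intro: summable_on_cmult_right s3 s4)
  also have "\<dots> = 2 * N2 a + 2 * N2 b"
    using infsum_cmult_right[of 2 "\<lambda>x. (cmod (a x))\<^sup>2" UNIV] infsum_cmult_right[of 2 "\<lambda>x. (cmod (b x))\<^sup>2" UNIV] s3 s4
    by simp
  finally show ?thesis unfolding l2_norm_sq .
qed


lemma inner_cnj: "l2_inner a b = cnj (l2_inner b a)"
  unfolding l2_inner_def by (simp flip: infsum_cnj add: mult.commute)

lemma inner_delta: "l2_inner (\<lambda>y. if y = x then 1 else 0) q = cnj (q x)"
proof -
  have "l2_inner (\<lambda>y. if y = x then 1 else 0) q = sum (\<lambda>y. (if y = x then 1 else 0) * cnj (q y)) {x}"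
    unfolding l2_inner_def by (rule fin_infsum[THEN conjunct2]) auto
  then show ?thesis by simp
qed

lemma inner_delta_r: "l2_inner r (\<lambda>y. c * (if y = x then 1 else 0)) = r x * cnj c"
proof -
  have "l2_inner r (\<lambda>y. c * (if y = x then 1 else 0)) = sum (\<lambda>y. r y * cnj (c * (if y = x then 1 else 0))) {x}"
    unfolding l2_inner_def by (rule fin_infsum[THEN conjunct2]) auto
  then show ?thesis by simp
qed

lemma inner_lim_left:
  assumes a: "a \<in> l2" and an: "\<And>n. an n \<in> l2" and c: "c \<in> l2"
    and lim: "(\<lambda>n. l2_norm (\<lambda>x. an n x - a x)) \<longlonglongrightarrow> 0"
  shows "(\<lambda>n. l2_inner (an n) c) \<longlonglongrightarrow> l2_inner a c"
proof -
  have "(\<lambda>n. l2_inner (an n) c - l2_inner a c) \<longlonglongrightarrow> 0"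
  proof (rule Lim_null_comparison)
    show "\<forall>\<^sub>F n in sequentially. norm (l2_inner (an n) c - l2_inner a c) \<le> l2_norm (\<lambda>x. an n x - a x) * l2_norm c"
      using l2_CS[OF l2_diff[OF an a] c] l2_inner_diff_left[OF an a c] by simp
    show "(\<lambda>n. l2_norm (\<lambda>x. an n x - a x) * l2_norm c) \<longlonglongrightarrow> 0"
      using tendsto_mult_left_zero[OF lim] by simp
  qed
  then show ?thesis by (rule LIM_zero_cancel)
qed

lemma inner_lim_right:
  assumes a: "a \<in> l2" and an: "\<And>n. an n \<in> l2" and c: "c \<in> l2"
    and lim: "(\<lambda>n. l2_norm (\<lambda>x. an n x - a x)) \<longlonglongrightarrow> 0"
  shows "(\<lambda>n. l2_inner c (an n)) \<longlonglongrightarrow> l2_inner c a"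
proof -
  have "(\<lambda>n. cnj (l2_inner (an n) c)) \<longlonglongrightarrow> cnj (l2_inner a c)"
    by (rule tendsto_cnj[OF inner_lim_left[OF a an c lim]])
  then show ?thesis by (simp flip: inner_cnj)
qed

lemma sym_clos:
  assumes T: "level_tree lev par" and lx: "lev x0 = 0"
    and wg: "(w, g) \<in> closure_graph (jacobi_graph par lam bet)"
    and vh: "(v, h) \<in> closure_graph (jacobi_graph par lam bet)"
  shows "l2_inner h w = l2_inner v g"
proof -
  have wl: "w \<in> l2" and gl: "g \<in> l2" using wg unfolding closure_graph_def by auto
  obtain s where s: "\<forall>n. s n \<in> jacobi_graph par lam bet"
    "(\<lambda>n. l2_norm (\<lambda>x. fst (s n) x - v x)) \<longlonglongrightarrow> 0"
    "(\<lambda>n. l2_norm (\<lambda>x. snd (s n) x - h x)) \<longlonglongrightarrow> 0" and vl: "v \<in> l2" and hl: "h \<in> l2"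
    using vh unfolding closure_graph_def by auto
  define b where "b n = fst (s n)" for n
  have sn: "snd (s n) = jacobi par lam bet (b n)" "b n \<in> fin_supp" for n
    using s(1)[rule_format, of n] unfolding jacobi_graph_def b_def by auto
  have bl: "b n \<in> l2" for n using sn(2) by (rule fin_supp_l2)
  have Jbl: "jacobi par lam bet (b n) \<in> l2" for n by (rule fin_supp_l2[OF fin_supp_J[OF T lx sn(2)]])
  have gJ: "g x = jacobi par lam bet w x" for x by (rule clos_pt[OF T lx wg])
  have eq: "l2_inner (jacobi par lam bet (b n)) w = l2_inner (b n) g" for n
    by (rule innerJ[OF T lx sn(2) gJ])
  have L1: "(\<lambda>n. l2_inner (jacobi par lam bet (b n)) w) \<longlonglongrightarrow> l2_inner h w"
    by (rule inner_lim_left[OF hl Jbl wl]) (use s(3) sn(1) in simp)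
  have L2: "(\<lambda>n. l2_inner (b n) g) \<longlonglongrightarrow> l2_inner v g"
    by (rule inner_lim_left[OF vl bl gl]) (use s(2) in \<open>simp add: b_def\<close>)
  show ?thesis using LIMSEQ_unique[OF L1 L2[folded eq]] .
qed

lemma cauchy_arith:
  fixes d dn dk dl q e :: real
  assumes d: "d \<ge> 0" and dn: "0 \<le> dn" "dn \<le> dl" and dk: "0 \<le> dk" "dk \<le> dl" and dl: "dl \<le> 1"
    and q: "q\<^sup>2 \<le> 2 * (d + dn)\<^sup>2 + 2 * (d + dk)\<^sup>2 - 4 * d\<^sup>2" and q0: "q \<ge> 0"
    and e: "e > 0" and small: "dl * (8 * d + 4) < e\<^sup>2"
  shows "q < e"
proof -
  have a: "(d + dn)\<^sup>2 \<le> d\<^sup>2 + 2 * d * dl + dl"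
  proof -
    have "dn \<le> 1" using dn dl by linarith
    then have "dn\<^sup>2 \<le> dn" using dn(1) unfolding power2_eq_square by (rule mult_left_le)
    moreover have "2 * d * dn \<le> 2 * d * dl" using d dn by (simp add: mult_left_mono)
    ultimately show ?thesis using dn by (simp add: power2_eq_square algebra_simps)
  qed
  have b: "(d + dk)\<^sup>2 \<le> d\<^sup>2 + 2 * d * dl + dl"
  proof -
    have "dk \<le> 1" using dk dl by linarith
    then have "dk\<^sup>2 \<le> dk" using dk(1) unfolding power2_eq_square by (rule mult_left_le)
    moreover have "2 * d * dk \<le> 2 * d * dl" using d dk by (simp add: mult_left_mono)
    ultimately show ?thesis using dk by (simp add: power2_eq_square algebra_simps)
  qed
  have "q\<^sup>2 \<le> dl * (8 * d + 4)" using q a b by (simp add: algebra_simps)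
  then have "q\<^sup>2 < e\<^sup>2" using small by simp
  then show ?thesis using q0 e by (simp add: power_less_imp_less_base)
qed


lemma perp:
  assumes r: "r \<in> l2" and m: "m \<in> l2"
    and le: "\<And>t. (l2_norm r)\<^sup>2 \<le> (l2_norm (\<lambda>x. r x - t * m x))\<^sup>2"
  shows "l2_inner r m = 0"
proof -
  define c where "c = l2_inner r m"
  define N where "N = (l2_norm m)\<^sup>2"
  define K where "K = (cmod c)\<^sup>2"
  define e where "e = 1 / (N + 1)"
  have N0: "N \<ge> 0" unfolding N_def by simp
  have e0: "e > 0" unfolding e_def using N0 by simp
  have eN: "e * N < 1" unfolding e_def using N0 by (simp add: field_simps)
  define t where "t = complex_of_real e * c"
  have cc: "cnj c * c = complex_of_real K" unfolding K_def by (metis complex_norm_square mult.commute)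
  have "cnj t * c = complex_of_real e * (cnj c * c)" unfolding t_def by simp
  then have ct: "cnj t * c = complex_of_real (e * K)" unfolding cc by simp
  have tt: "(cmod t)\<^sup>2 = e\<^sup>2 * K"
    unfolding t_def K_def using e0 by (simp add: norm_mult power_mult_distrib)
  have "(l2_norm r)\<^sup>2 \<le> (l2_norm r)\<^sup>2 - 2 * (e * K) + e\<^sup>2 * K * N"
    using le[of t] unfolding expand_norm[OF r m] c_def[symmetric] ct tt N_def[symmetric] by simp
  then have "0 \<le> e * K * (e * N - 2)" by (simp add: power2_eq_square algebra_simps)
  moreover have "e * N - 2 < 0" using eN by simp
  moreover have "K \<ge> 0" unfolding K_def by simp
  ultimately have "e * K \<le> 0" by (smt (verit) mult_nonneg_nonneg mult_pos_neg e0 zero_less_mult_iff)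
  then have "K = 0" using e0 \<open>K \<ge> 0\<close> by (smt (verit) mult_pos_pos)
  then show ?thesis unfolding K_def c_def by simp
qed

lemma r_zero:
  assumes T: "level_tree lev par" and lx: "lev x0 = 0"
    and H: "\<forall>w\<in>l2. (\<forall>x. jacobi par lam bet w x = z * w x) \<longrightarrow> w = (\<lambda>x. 0)"
    and r: "r \<in> l2"
    and pp: "\<And>x. l2_inner r (\<lambda>y. jacobi par lam bet (\<lambda>y. if y = x then 1 else 0) y - z * (if y = x then 1 else 0)) = 0"
  shows "r = (\<lambda>x. 0)"
proof -
  have ev: "jacobi par lam bet r x = r x * cnj z" for x
  proof -
    let ?d = "\<lambda>y. if y = x then 1 else (0::complex)"
    have dfin: "?d \<in> fin_supp" by (rule delta_fin)
    have Jdl: "jacobi par lam bet ?d \<in> l2" by (rule fin_supp_l2[OF fin_supp_J[OF T lx dfin]])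
    have zdl: "(\<lambda>y. z * ?d y) \<in> l2" using l2_scale[OF fin_supp_l2[OF dfin]] by blast
    have "l2_inner r (jacobi par lam bet ?d) = cnj (l2_inner (jacobi par lam bet ?d) r)" by (rule inner_cnj)
    also have "l2_inner (jacobi par lam bet ?d) r = l2_inner ?d (jacobi par lam bet r)"
      by (rule innerJ[OF T lx dfin]) simp
    also have "\<dots> = cnj (jacobi par lam bet r x)" by (rule inner_delta)
    finally have a: "l2_inner r (jacobi par lam bet ?d) = jacobi par lam bet r x" by simp
    have b: "l2_inner r (\<lambda>y. z * ?d y) = r x * cnj z" by (rule inner_delta_r)
    have "0 = l2_inner r (jacobi par lam bet ?d) - l2_inner r (\<lambda>y. z * ?d y)"
      using pp[of x] l2_inner_diff_right[OF Jdl zdl r] by simp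
    then show ?thesis using a b by simp
  qed
  have cl: "(\<lambda>x. cnj (r x)) \<in> l2" using r unfolding l2_def by simp
  have "\<forall>x. jacobi par lam bet (\<lambda>x. cnj (r x)) x = z * cnj (r x)"
    unfolding jacobi_cnj ev by (simp add: mult.commute)
  then have "(\<lambda>x. cnj (r x)) = (\<lambda>x. 0)" using H cl by blast
  then show ?thesis by (metis complex_cnj_zero_iff)
qed


lemma range_dense:
  assumes T: "level_tree lev par" and lx: "lev x0 = 0" and z: "Im z \<noteq> 0"
    and H: "\<forall>w\<in>l2. (\<forall>x. jacobi par lam bet w x = z * w x) \<longrightarrow> w = (\<lambda>x. 0)"
    and h0: "h0 \<in> l2"
  shows "\<exists>f. (f, \<lambda>x. h0 x + z * f x) \<in> closure_graph (jacobi_graph par lam bet)"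
proof -
  define R where "R f x = jacobi par lam bet f x - z * f x" for f x
  have Rl: "R f \<in> l2" if "f \<in> fin_supp" for f
  proof -
    have "(\<lambda>x. jacobi par lam bet f x - z * f x) \<in> l2"
      using l2_diff[OF fin_supp_l2[OF fin_supp_J[OF T lx that]] l2_scale[OF fin_supp_l2[OF that], THEN conjunct1]] .
    then show ?thesis unfolding R_def[abs_def] .
  qed
  have Rlin: "R (\<lambda>x. a * f x + b * g x) x = a * R f x + b * R g x" for a b f g x
    unfolding R_def jacobi_lin by (simp add: algebra_simps)
  have Rdiff: "R (\<lambda>x. f x - g x) x = R f x - R g x" for f g x
    unfolding R_def jacobi_diff by (simp add: algebra_simps)
  define X where "X = (\<lambda>f. l2_norm (\<lambda>x. h0 x - R f x)) ` fin_supp"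
  define d where "d = Inf X"
  have zf: "(\<lambda>x. 0) \<in> fin_supp" unfolding fin_supp_def by simp
  have Xne: "X \<noteq> {}" unfolding X_def using zf by blast
  have Xbdd: "bdd_below X" unfolding X_def by (rule bdd_belowI[of _ 0]) (auto simp: l2_norm_nonneg)
  have dle: "d \<le> l2_norm (\<lambda>x. h0 x - R f x)" if "f \<in> fin_supp" for f
    unfolding d_def by (rule cInf_lower[OF _ Xbdd]) (use that in \<open>simp add: X_def\<close>)
  have d0: "d \<ge> 0" unfolding d_def by (rule cInf_greatest[OF Xne]) (auto simp: X_def l2_norm_nonneg)
  define dd where "dd n = inverse (real (Suc n))" for n
  have dd0: "dd n > 0" for n unfolding dd_def by simp
  have ex: "\<exists>f. f \<in> fin_supp \<and> l2_norm (\<lambda>x. h0 x - R f x) < d + dd n" for n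
  proof -
    have "Inf X < d + dd n" using dd0[of n] unfolding d_def by simp
    then obtain y where "y \<in> X" "y < d + dd n" using cInf_lessD[OF Xne] by blast
    then show ?thesis unfolding X_def by blast
  qed
  then obtain fs where fs: "\<And>n. fs n \<in> fin_supp" "\<And>n. l2_norm (\<lambda>x. h0 x - R (fs n) x) < d + dd n"
    by metis
  define m where "m n = R (fs n)" for n
  have ml: "m n \<in> l2" for n unfolding m_def by (rule Rl[OF fs(1)])
  have fl: "fs n \<in> l2" for n by (rule fin_supp_l2[OF fs(1)])
  have en: "d \<le> l2_norm (\<lambda>x. h0 x - m n x)" "l2_norm (\<lambda>x. h0 x - m n x) < d + dd n" for n
    using dle[OF fs(1)] fs(2) unfolding m_def by auto
  have ddmono: "dd n \<le> dd N" if "N \<le> n" for n N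
    unfolding dd_def using that by (simp add: le_imp_inverse_le)
  have mC: "\<exists>N. \<forall>n\<ge>N. \<forall>k\<ge>N. l2_norm (\<lambda>x. m n x - m k x) < e" if e: "e > 0" for e
  proof -
    define del where "del = min 1 (e\<^sup>2 / (8 * d + 4))"
    have del0: "del > 0" unfolding del_def using d0 e by simp
    obtain N where N: "inverse (real (Suc N)) < del" using reals_Archimedean[OF del0] by blast
    have dlN: "dd N \<le> 1" "dd N * (8 * d + 4) < e\<^sup>2"
    proof -
      have "del \<le> 1" unfolding del_def by simp
      then show "dd N \<le> 1" using N unfolding dd_def by simp
      have "dd N < e\<^sup>2 / (8 * d + 4)" using N unfolding dd_def del_def by simp
      then show "dd N * (8 * d + 4) < e\<^sup>2" using d0 by (simp add: pos_less_divide_eq)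
    qed
    show ?thesis
    proof (intro exI[of _ N] allI impI)
      fix n k assume n: "n \<ge> N" and k: "k \<ge> N"
      define a where "a x = h0 x - m n x" for x
      define b where "b x = h0 x - m k x" for x
      have al: "a \<in> l2" unfolding a_def[abs_def] by (rule l2_diff[OF h0 ml])
      have bl: "b \<in> l2" unfolding b_def[abs_def] by (rule l2_diff[OF h0 ml])
      define avg where "avg x = (1/2) * fs n x + (1/2) * fs k x" for x
      have avgf: "avg \<in> fin_supp" unfolding avg_def[abs_def] by (rule fin_supp_lin[OF fs(1) fs(1)])
      have "a x + b x = 2 * (h0 x - R avg x)" for x
        unfolding a_def b_def avg_def Rlin m_def by (simp add: algebra_simps)
      then have "l2_norm (\<lambda>x. a x + b x) = 2 * l2_norm (\<lambda>x. h0 x - R avg x)"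
        using l2_scale[OF l2_diff[OF h0 Rl[OF avgf]], of 2] by simp
      then have ab: "l2_norm (\<lambda>x. a x + b x) \<ge> 2 * d" using dle[OF avgf] by simp
      have amb: "l2_norm (\<lambda>x. a x - b x) = l2_norm (\<lambda>x. m n x - m k x)"
      proof -
        have "(\<lambda>x. a x - b x) = (\<lambda>x. m k x - m n x)" unfolding a_def b_def by auto
        then show ?thesis using l2_norm_commute[of "m k" "m n"] by simp
      qed
      have par: "(l2_norm (\<lambda>x. a x + b x))\<^sup>2 + (l2_norm (\<lambda>x. m n x - m k x))\<^sup>2 = 2 * (l2_norm a)\<^sup>2 + 2 * (l2_norm b)\<^sup>2"
        using parallelogram[OF al bl] amb by simp
      have a2: "(l2_norm a)\<^sup>2 \<le> (d + dd n)\<^sup>2"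
        using en[of n] d0 unfolding a_def[abs_def] by (intro power_mono) auto
      have b2: "(l2_norm b)\<^sup>2 \<le> (d + dd k)\<^sup>2"
        using en[of k] d0 unfolding b_def[abs_def] by (intro power_mono) auto
      have ab2: "(2 * d)\<^sup>2 \<le> (l2_norm (\<lambda>x. a x + b x))\<^sup>2" using ab d0 by (intro power_mono) auto
      have q: "(l2_norm (\<lambda>x. m n x - m k x))\<^sup>2 \<le> 2 * (d + dd n)\<^sup>2 + 2 * (d + dd k)\<^sup>2 - 4 * d\<^sup>2"
        using par a2 b2 ab2 by (simp add: power_mult_distrib)
      show "l2_norm (\<lambda>x. m n x - m k x) < e"
        by (rule cauchy_arith[OF d0 _ ddmono[OF n] _ ddmono[OF k] dlN(1) q l2_norm_nonneg e dlN(2)])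
           (use dd0 in \<open>auto simp: less_imp_le\<close>)
    qed
  qed
  have fC: "\<exists>N. \<forall>n\<ge>N. \<forall>k\<ge>N. l2_norm (\<lambda>x. fs n x - fs k x) < e" if e: "e > 0" for e
  proof -
    have iz: "\<bar>Im z\<bar> > 0" using z by simp
    obtain N where N: "\<forall>n\<ge>N. \<forall>k\<ge>N. l2_norm (\<lambda>x. m n x - m k x) < e * \<bar>Im z\<bar>"
      using mC[of "e * \<bar>Im z\<bar>"] e iz by auto
    show ?thesis
    proof (intro exI[of _ N] allI impI)
      fix n k assume n: "n \<ge> N" and k: "k \<ge> N"
      have df: "(\<lambda>x. fs n x - fs k x) \<in> fin_supp"
        using fin_supp_lin[OF fs(1)[of n] fs(1)[of k], of 1 "-1"] by simp
      have "\<bar>Im z\<bar> * l2_norm (\<lambda>x. fs n x - fs k x) \<le> l2_norm (\<lambda>x. jacobi par lam bet (\<lambda>x. fs n x - fs k x) x - z * (fs n x - fs k x))"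
        by (rule LB[OF T lx df])
      also have "(\<lambda>x. jacobi par lam bet (\<lambda>x. fs n x - fs k x) x - z * (fs n x - fs k x)) = (\<lambda>x. m n x - m k x)"
        using Rdiff[of "fs n" "fs k"] unfolding m_def R_def by simp
      finally have "\<bar>Im z\<bar> * l2_norm (\<lambda>x. fs n x - fs k x) < e * \<bar>Im z\<bar>" using N n k by fastforce
      then show "l2_norm (\<lambda>x. fs n x - fs k x) < e" using iz by (simp add: mult.commute)
    qed
  qed
  obtain f where f: "f \<in> l2" and flim: "(\<lambda>n. l2_norm (\<lambda>x. fs n x - f x)) \<longlonglongrightarrow> 0"
    using l2_complete[OF fl fC] by blast
  obtain q where q: "q \<in> l2" and qlim: "(\<lambda>n. l2_norm (\<lambda>x. m n x - q x)) \<longlonglongrightarrow> 0"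
    using l2_complete[OF ml mC] by blast
  have zfl: "(\<lambda>x. z * f x) \<in> l2" using l2_scale[OF f] by blast
  have qzf: "(\<lambda>x. q x + z * f x) \<in> l2" using l2_add[OF q zfl] by blast
  have inC: "(f, \<lambda>x. q x + z * f x) \<in> closure_graph (jacobi_graph par lam bet)"
    unfolding closure_graph_def
  proof (intro CollectI case_prodI conjI f qzf exI[of _ "\<lambda>n. (fs n, jacobi par lam bet (fs n))"] allI)
    fix n show "(fs n, jacobi par lam bet (fs n)) \<in> jacobi_graph par lam bet"
      unfolding jacobi_graph_def using fs(1) by blast
  next
    show "(\<lambda>n. l2_norm (\<lambda>x. fst (fs n, jacobi par lam bet (fs n)) x - f x)) \<longlonglongrightarrow> 0"
      using flim by simp
  next
    have bnd: "l2_norm (\<lambda>x. jacobi par lam bet (fs n) x - (q x + z * f x)) \<le> l2_norm (\<lambda>x. m n x - q x) + cmod z * l2_norm (\<lambda>x. fs n x - f x)" for n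
    proof -
      have e: "(\<lambda>x. jacobi par lam bet (fs n) x - (q x + z * f x)) = (\<lambda>x. (m n x - q x) + z * (fs n x - f x))"
        unfolding m_def R_def by (auto simp: algebra_simps)
      show ?thesis unfolding e
        using l2_add[OF l2_diff[OF ml q] l2_scale[OF l2_diff[OF fl f], THEN conjunct1, of z]]
          l2_scale[OF l2_diff[OF fl f], of z] by simp
    qed
    have "(\<lambda>n. l2_norm (\<lambda>x. jacobi par lam bet (fs n) x - (q x + z * f x))) \<longlonglongrightarrow> 0"
    proof (rule Lim_null_comparison)
      show "\<forall>\<^sub>F n in sequentially. norm (l2_norm (\<lambda>x. jacobi par lam bet (fs n) x - (q x + z * f x))) \<le> l2_norm (\<lambda>x. m n x - q x) + cmod z * l2_norm (\<lambda>x. fs n x - f x)"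
        by (rule always_eventually) (simp add: bnd abs_of_nonneg[OF l2_norm_nonneg])
      show "(\<lambda>n. l2_norm (\<lambda>x. m n x - q x) + cmod z * l2_norm (\<lambda>x. fs n x - f x)) \<longlonglongrightarrow> 0"
        using tendsto_add_zero[OF qlim tendsto_mult_right_zero[OF flim]] by simp
    qed
    then show "(\<lambda>n. l2_norm (\<lambda>x. snd (fs n, jacobi par lam bet (fs n)) x - (q x + z * f x))) \<longlonglongrightarrow> 0"
      by simp
  qed
  have qR: "q x = R f x" for x
    using clos_pt[OF T lx inC, of x] unfolding R_def by (simp add: algebra_simps)
  define r where "r x = h0 x - q x" for x
  have rl: "r \<in> l2" unfolding r_def[abs_def] by (rule l2_diff[OF h0 q])
  have ddlim: "dd \<longlonglongrightarrow> 0" unfolding dd_def by (rule LIMSEQ_inverse_real_of_nat)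
  have rd: "l2_norm r \<le> d"
  proof (rule LIMSEQ_le_const)
    show "(\<lambda>n. d + dd n + l2_norm (\<lambda>x. m n x - q x)) \<longlonglongrightarrow> d"
      using tendsto_add[OF tendsto_add[OF tendsto_const[of d] ddlim] qlim] by simp
    show "\<exists>N. \<forall>n\<ge>N. l2_norm r \<le> d + dd n + l2_norm (\<lambda>x. m n x - q x)"
    proof (intro exI[of _ 0] allI impI)
      fix n
      have "l2_norm r \<le> l2_norm (\<lambda>x. h0 x - m n x) + l2_norm (\<lambda>x. m n x - q x)"
        unfolding r_def[abs_def] by (rule l2_norm_tri[OF h0 ml q])
      then show "l2_norm r \<le> d + dd n + l2_norm (\<lambda>x. m n x - q x)" using en(2)[of n] by simp
    qed
  qed
  have rperp: "l2_inner r (R \<phi>) = 0" if phi: "\<phi> \<in> fin_supp" for \<phi>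
  proof (rule perp[OF rl Rl[OF phi]])
    fix t
    have Rpl: "R \<phi> \<in> l2" by (rule Rl[OF phi])
    have tRl: "(\<lambda>x. t * R \<phi> x) \<in> l2" using l2_scale[OF Rpl] by blast
    have lb: "d \<le> l2_norm (\<lambda>x. r x - t * R \<phi> x)"
    proof (rule LIMSEQ_le_const2)
      show "(\<lambda>n. d - l2_norm (\<lambda>x. m n x - q x)) \<longlonglongrightarrow> d"
        using tendsto_diff[OF tendsto_const[of d] qlim] by simp
      show "\<exists>N. \<forall>n\<ge>N. d - l2_norm (\<lambda>x. m n x - q x) \<le> l2_norm (\<lambda>x. r x - t * R \<phi> x)"
      proof (intro exI[of _ 0] allI impI)
        fix n
        define g where "g x = fs n x + t * \<phi> x" for x
        have gf: "g \<in> fin_supp" unfolding g_def[abs_def] using fin_supp_lin[OF fs(1)[of n] phi, of 1 t] by simp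
        have eq: "(\<lambda>x. h0 x - R g x) = (\<lambda>x. (r x - t * R \<phi> x) + (q x - m n x))"
          unfolding g_def r_def m_def using Rlin[where a=1 and f="fs n" and b=t and g=\<phi>] by (auto simp: algebra_simps)
        have "d \<le> l2_norm (\<lambda>x. h0 x - R g x)" by (rule dle[OF gf])
        also have "\<dots> \<le> l2_norm (\<lambda>x. r x - t * R \<phi> x) + l2_norm (\<lambda>x. q x - m n x)"
          unfolding eq by (rule l2_add[OF l2_diff[OF rl tRl] l2_diff[OF q ml], THEN conjunct2])
        finally show "d - l2_norm (\<lambda>x. m n x - q x) \<le> l2_norm (\<lambda>x. r x - t * R \<phi> x)"
          using l2_norm_commute[of q "m n"] by simp
      qed
    qed
    show "(l2_norm r)\<^sup>2 \<le> (l2_norm (\<lambda>x. r x - t * R \<phi> x))\<^sup>2"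
      using rd lb l2_norm_nonneg[of r] by (intro power_mono) auto
  qed
  have "r = (\<lambda>x. 0)"
  proof (rule r_zero[OF T lx H rl])
    fix x
    show "l2_inner r (\<lambda>y. jacobi par lam bet (\<lambda>y. if y = x then 1 else 0) y - z * (if y = x then 1 else 0)) = 0"
      using rperp[OF delta_fin[of x]] unfolding R_def[abs_def] by simp
  qed
  then have "h0 x - q x = 0" for x unfolding r_def by (rule fun_cong)
  then have "q = h0" by (intro ext) (metis right_minus_eq)
  then have "(f, \<lambda>x. h0 x + z * f x) \<in> closure_graph (jacobi_graph par lam bet)" using inC by simp
  then show ?thesis by blast
qed


lemma adj_sub:
  assumes T: "level_tree lev par" and lx: "lev x0 = 0" and z: "Im z \<noteq> 0"
    and H: "\<forall>w\<in>l2. (\<forall>x. jacobi par lam bet w x = z * w x) \<longrightarrow> w = (\<lambda>x. 0)"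
    and wg: "(w, g) \<in> adjoint_graph (closure_graph (jacobi_graph par lam bet))"
  shows "(w, g) \<in> closure_graph (jacobi_graph par lam bet)"
proof -
  have wl: "w \<in> l2" and gl: "g \<in> l2"
    and adj: "\<And>v h. (v, h) \<in> closure_graph (jacobi_graph par lam bet) \<Longrightarrow> l2_inner h w = l2_inner v g"
    using wg unfolding adjoint_graph_def by auto
  have gJ: "g x = jacobi par lam bet w x" for x
  proof -
    let ?d = "\<lambda>y. if y = x then 1 else (0::complex)"
    have dfin: "?d \<in> fin_supp" by (rule delta_fin)
    have "l2_inner (jacobi par lam bet ?d) w = l2_inner ?d g" by (rule adj[OF G_sub[OF T lx dfin]])
    moreover have "l2_inner (jacobi par lam bet ?d) w = l2_inner ?d (jacobi par lam bet w)"
      by (rule innerJ[OF T lx dfin]) simp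
    ultimately have "cnj (g x) = cnj (jacobi par lam bet w x)" unfolding inner_delta by simp
    then show ?thesis by simp
  qed
  define h0 where "h0 x = g x - z * w x" for x
  have h0l: "h0 \<in> l2" unfolding h0_def[abs_def] by (rule l2_diff[OF gl l2_scale[OF wl, THEN conjunct1]])
  obtain f where fC: "(f, \<lambda>x. h0 x + z * f x) \<in> closure_graph (jacobi_graph par lam bet)"
    using range_dense[OF T lx z H h0l] by blast
  have fl: "f \<in> l2" using fC unfolding closure_graph_def by auto
  have fJ: "h0 x + z * f x = jacobi par lam bet f x" for x by (rule clos_pt[OF T lx fC])
  have "\<forall>x. jacobi par lam bet (\<lambda>x. w x - f x) x = z * (w x - f x)"
  proof
    fix x
    show "jacobi par lam bet (\<lambda>x. w x - f x) x = z * (w x - f x)"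
      unfolding jacobi_diff fJ[symmetric] gJ[symmetric] h0_def by (simp add: algebra_simps)
  qed
  then have "(\<lambda>x. w x - f x) = (\<lambda>x. 0)" using H l2_diff[OF wl fl] by blast
  then have "w x - f x = 0" for x by (rule fun_cong)
  then have wf: "w x = f x" for x by simp
  then have wf': "w = f" by (intro ext)
  moreover have "g = (\<lambda>x. h0 x + z * f x)"
  proof
    fix x show "g x = h0 x + z * f x" by (simp add: fJ gJ wf')
  qed
  ultimately show ?thesis using fC by simp
qed

lemma esa_of_H:
  assumes T: "level_tree lev par" and lx: "lev x0 = 0" and z: "Im z \<noteq> 0"
    and H: "\<forall>w\<in>l2. (\<forall>x. jacobi par lam bet w x = z * w x) \<longrightarrow> w = (\<lambda>x. 0)"
  shows "essentially_selfadjoint (jacobi_graph par lam bet)"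
  unfolding essentially_selfadjoint_def selfadjoint_graph_def
proof
  show "closure_graph (jacobi_graph par lam bet) \<subseteq> adjoint_graph (closure_graph (jacobi_graph par lam bet))"
  proof
    fix p assume p: "p \<in> closure_graph (jacobi_graph par lam bet)"
    obtain w g where pwg: "p = (w, g)" by (cases p)
    have "w \<in> l2" "g \<in> l2" using p pwg unfolding closure_graph_def by auto
    moreover have "\<forall>(v, h)\<in>closure_graph (jacobi_graph par lam bet). l2_inner h w = l2_inner v g"
      using sym_clos[OF T lx p[unfolded pwg]] by blast
    ultimately show "p \<in> adjoint_graph (closure_graph (jacobi_graph par lam bet))"
      unfolding adjoint_graph_def pwg by blast
  qed
  show "adjoint_graph (closure_graph (jacobi_graph par lam bet)) \<subseteq> closure_graph (jacobi_graph par lam bet)"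
  proof
    fix p assume p: "p \<in> adjoint_graph (closure_graph (jacobi_graph par lam bet))"
    obtain w g where pwg: "p = (w, g)" by (cases p)
    show "p \<in> closure_graph (jacobi_graph par lam bet)"
      unfolding pwg by (rule adj_sub[OF T lx z H p[unfolded pwg]])
  qed
qed

theorem theorem5:
  fixes lev :: "'a \<Rightarrow> nat" and par :: "'a \<Rightarrow> 'a"
    and lam bet :: "'a \<Rightarrow> real" and x0 :: 'a and z :: complex and u :: "'a \<Rightarrow> complex"
  assumes tree: "level_tree lev par"
    and lam_pos: "\<And>x. lam x > 0"
    and not_esa: "\<not> essentially_selfadjoint (jacobi_graph par lam bet)"
    and x0: "lev x0 = 0"
    and z: "Im z \<noteq> 0"
    and u_nz: "u \<noteq> (\<lambda>x. 0)"
    and u_x0: "u x0 = 0"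
    and eig: "\<And>x. x \<noteq> x0 \<Longrightarrow> jacobi par lam bet u x = z * u x"
  shows "u \<in> l2"
proof -
  have "\<not> (\<forall>w\<in>l2. (\<forall>x. jacobi par lam bet w x = z * w x) \<longrightarrow> w = (\<lambda>x. 0))"
    using esa_of_H[OF tree x0 z] not_esa by blast
  then obtain w where w: "w \<in> l2" "\<And>x. jacobi par lam bet w x = z * w x" "w \<noteq> (\<lambda>x. 0)" by blast
  have w0: "w x0 \<noteq> 0"
  proof
    assume "w x0 = 0"
    then have "w = (\<lambda>x. 0)" by (rule eig_x0[OF tree lam_pos x0 z w(2)])
    then show False using w(3) by simp
  qed
  show ?thesis by (rule partB[OF tree x0 z w(1,2) w0 eig u_x0])
qed


end
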